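(* Let $n\ge0$ be an integer which cannot be written as $P_1+2P_2$ with $P_1,P_2$ (generalized) pentagonal numbers. Then $$b^{4}_{3,4}(16n+3)\equiv 0\pmod 8\quad\text{and}\quad b^{4}_{3,4}(48n+7)\equiv 0\pmod 8.$$
   Context: For integers $r\ge1$ write $f_r=\prod_{j\ge1}(1-q^{rj})$. $b^{4}_{3,4}(n)$ is the number of $4$-colored partitions of $n$ into parts not divisible by $3$ or $4$, i.e. $\sum_{n\ge0}b^4_{3,4}(n)q^n=\dfrac{f_3^4f_4^4}{f_1^4f_{12}^4}$. A (generalized) pentagonal number is an integer of the form $k(3k-1)/2$ with $k\in\mathbb{Z}$. *)

theory Defs
  imports Main "HOL-Library.Multiset"
begin

text \<open>A 4-colored partition of n into parts not divisible by 3 or 4 is a finite multiset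
  of pairs (part, colour) with part \<ge> 1, 3 and 4 not dividing the part, colour in {0,1,2,3},
  whose parts sum to n.  b4_34 n counts them.\<close>

definition b4_34 :: "nat \<Rightarrow> nat" where
  "b4_34 n = card {M :: (nat \<times> nat) multiset.
      (\<forall>x \<in># M. 0 < fst x \<and> \<not> 3 dvd fst x \<and> \<not> 4 dvd fst x \<and> snd x < 4) \<and>
      sum_mset (image_mset fst M) = n}"

definition pentagonal :: "int \<Rightarrow> bool" where
  "pentagonal p \<longleftrightarrow> (\<exists>k::int. p = k * (3 * k - 1) div 2)"

end

theory Submission
  imports Defs "HOL-Computational_Algebra.Formal_Power_Series" "HOL-Library.Z2" "HOL-Library.Disjoint_Sets"
begin

unbundle fps_syntax

definition teq :: "nat \<Rightarrow> 'a::zero fps \<Rightarrow> 'a fps \<Rightarrow> bool" where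
  "teq N a b \<longleftrightarrow> (\<forall>i\<le>N. a $ i = b $ i)"

lemma teq_refl[simp]: "teq N a a" by (simp add: teq_def)
lemma teq_sym: "teq N a b \<Longrightarrow> teq N b a" by (simp add: teq_def)
lemma teq_trans: "teq N a b \<Longrightarrow> teq N b c \<Longrightarrow> teq N a c" by (simp add: teq_def)
lemma teq_mono: "teq N a b \<Longrightarrow> M \<le> N \<Longrightarrow> teq M a b" by (simp add: teq_def)
lemma teq_eq: "(\<And>N. teq N a b) \<Longrightarrow> a = b"
  by (rule fps_ext) (auto simp: teq_def)

lemma teq_add: "teq N a b \<Longrightarrow> teq N c d \<Longrightarrow> teq N (a + c) (b + d)"
  by (simp add: teq_def)

lemma teq_mult:
  fixes a b c d :: "'a::comm_semiring_1 fps"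
  shows "teq N a b \<Longrightarrow> teq N c d \<Longrightarrow> teq N (a * c) (b * d)"
  unfolding teq_def fps_mult_nth by (auto intro!: sum.cong)

lemma teq_mult_left:
  fixes a b c :: "'a::comm_semiring_1 fps"
  shows "teq N a b \<Longrightarrow> teq N (c * a) (c * b)"
  by (rule teq_mult) auto

lemma teq_power:
  fixes a b :: "'a::comm_semiring_1 fps"
  shows "teq N a b \<Longrightarrow> teq N (a ^ k) (b ^ k)"
  by (induction k) (auto intro: teq_mult)

lemma teq_prod:
  fixes g h :: "'b \<Rightarrow> 'a::comm_semiring_1 fps"
  shows "(\<And>j. j \<in> A \<Longrightarrow> teq N (g j) (h j)) \<Longrightarrow> teq N (prod g A) (prod h A)"
proof (induction A rule: infinite_finite_induct)
  case (insert x F)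
  then show ?case by (auto intro: teq_mult)
qed auto

lemma teq_prod_subset:
  fixes g :: "'b \<Rightarrow> 'a::comm_semiring_1 fps"
  assumes "finite S" "T \<subseteq> S" "\<And>j. j \<in> S - T \<Longrightarrow> teq N (g j) 1"
  shows "teq N (prod g S) (prod g T)"
proof -
  have "prod g S = prod g T * prod g (S - T)"
    using assms by (metis prod.subset_diff mult.commute)
  moreover have "teq N (prod g (S - T)) (prod (\<lambda>_. 1) (S - T))"
    using assms(3) by (intro teq_prod) auto
  ultimately show ?thesis using teq_mult_left[of N "prod g (S - T)" 1 "prod g T"] by simp
qed

lemma teq_inverse:
  fixes a b :: "'a::field fps"
  assumes "teq N a b" "a $ 0 \<noteq> 0"
  shows "teq N (inverse a) (inverse b)"
proof -
  have b0: "b $ 0 \<noteq> 0" using assms by (auto simp: teq_def)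
  have "teq N (inverse a * b) (inverse a * a)" using assms(1) teq_sym teq_mult_left by blast
  then have "teq N (inverse a * b * inverse b) (1 * inverse b)"
    using assms(2) by (intro teq_mult) (auto simp: inverse_mult_eq_1)
  then show ?thesis using b0 by (simp add: mult.assoc inverse_mult_eq_1' teq_sym)
qed

lemma teq_X_power_mult:
  fixes a b :: "'a::comm_semiring_1 fps"
  shows "teq N a b \<Longrightarrow> teq (N + k) (fps_X ^ k * a) (fps_X ^ k * b)"
  by (auto simp: teq_def fps_X_power_mult_nth)

definition dil :: "nat \<Rightarrow> 'a::zero fps \<Rightarrow> 'a fps" where
  "dil r a = Abs_fps (\<lambda>n. if r dvd n then a $ (n div r) else 0)"

lemma dil_nth: "dil r a $ n = (if r dvd n then a $ (n div r) else 0)"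
  by (simp add: dil_def)

lemma dil_nth_mult[simp]: "r > 0 \<Longrightarrow> dil r a $ (r * n) = a $ n"
  by (simp add: dil_def)

lemma dil_add: "dil r ((a::'a::monoid_add fps) + b) = dil r a + dil r b"
  by (rule fps_ext) (simp add: dil_nth)

lemma dil_diff: "dil r ((a::'a::ab_group_add fps) - b) = dil r a - dil r b"
  by (rule fps_ext) (simp add: dil_nth)

lemma dil_1: "r > 0 \<Longrightarrow> dil r (1::'a::{zero,one} fps) = 1"
  by (rule fps_ext) (auto simp: dil_nth elim!: dvdE)

lemma dil_0[simp]: "dil r 0 = 0"
  by (rule fps_ext) (simp add: dil_nth)

lemma dil_X_power: "r > 0 \<Longrightarrow> dil r (fps_X ^ k :: 'a::comm_semiring_1 fps) = fps_X ^ (r * k)"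
  by (rule fps_ext) (auto simp: dil_nth elim!: dvdE)

lemma dil_mult:
  fixes a b :: "'a::comm_semiring_1 fps"
  assumes r: "r > 0"
  shows "dil r (a * b) = dil r a * dil r b"
proof (rule fps_ext)
  fix n
  show "dil r (a * b) $ n = (dil r a * dil r b) $ n"
  proof (cases "r dvd n")
    case False
    have "(dil r a * dil r b) $ n = (\<Sum>i=0..n. dil r a $ i * dil r b $ (n - i))"
      by (simp add: fps_mult_nth)
    also have "\<dots> = 0"
    proof (intro sum.neutral ballI)
      fix i assume "i \<in> {0..n}"
      then have "\<not> (r dvd i \<and> r dvd (n - i))" using False
        by (metis atLeastAtMost_iff dvd_add le_add_diff_inverse)
      then show "dil r a $ i * dil r b $ (n - i) = 0" by (auto simp: dil_nth)
    qed
    finally show ?thesis using False by (simp add: dil_nth)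
  next
    case True
    then obtain m where n: "n = r * m" by (auto elim: dvdE)
    have "(dil r a * dil r b) $ n = (\<Sum>i=0..n. dil r a $ i * dil r b $ (n - i))"
      by (simp add: fps_mult_nth)
    also have "\<dots> = (\<Sum>i\<in>(\<lambda>j. r * j) ` {0..m}. dil r a $ i * dil r b $ (n - i))"
    proof (rule sum.mono_neutral_right)
      show "(\<lambda>j. r * j) ` {0..m} \<subseteq> {0..n}" using n by auto
      show "\<forall>i\<in>{0..n} - (\<lambda>j. r * j) ` {0..m}. dil r a $ i * dil r b $ (n - i) = 0"
      proof
        fix i assume i: "i \<in> {0..n} - (\<lambda>j. r * j) ` {0..m}"
        show "dil r a $ i * dil r b $ (n - i) = 0"
        proof (cases "r dvd i")
          case True
          then obtain j where "i = r * j" by (auto elim: dvdE)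
          with i n r have False by auto
          then show ?thesis ..
        qed (simp add: dil_nth)
      qed
    qed simp
    also have "\<dots> = (\<Sum>j=0..m. dil r a $ (r * j) * dil r b $ (n - r * j))"
      using r by (subst sum.reindex) (auto simp: inj_on_def)
    also have "\<dots> = (\<Sum>j=0..m. a $ j * b $ (m - j))"
    proof (intro sum.cong refl)
      fix j assume "j \<in> {0..m}"
      then have "n - r * j = r * (m - j)" using n by (simp add: right_diff_distrib')
      then show "dil r a $ (r * j) * dil r b $ (n - r * j) = a $ j * b $ (m - j)"
        using r by simp
    qed
    also have "\<dots> = (a * b) $ m" by (simp add: fps_mult_nth)
    finally show ?thesis using n r by simp
  qed
qed

lemma dil_power:
  fixes a :: "'a::comm_semiring_1 fps"
  shows "r > 0 \<Longrightarrow> dil r (a ^ k) = dil r a ^ k"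
  by (induction k) (auto simp: dil_1 dil_mult)

lemma dil_prod:
  fixes g :: "'b \<Rightarrow> 'a::comm_semiring_1 fps"
  shows "r > 0 \<Longrightarrow> dil r (prod g A) = (\<Prod>j\<in>A. dil r (g j))"
proof (induction A rule: infinite_finite_induct)
  case (insert x F)
  then show ?case by (simp add: dil_mult)
qed (auto simp: dil_1)

lemma dil_dil: "r > 0 \<Longrightarrow> s > 0 \<Longrightarrow> dil r (dil s a) = dil (r * s) a"
  by (rule fps_ext) (auto simp: dil_nth elim!: dvdE simp: mult.commute mult.left_commute dvd_mult_cancel1)

lemma dil_inverse:
  fixes a :: "'a::field fps"
  assumes "r > 0" "a $ 0 \<noteq> 0"
  shows "dil r (inverse a) = inverse (dil r a)"
proof -
  have "dil r a * dil r (inverse a) = 1"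
    using assms by (simp flip: dil_mult add: inverse_mult_eq_1' dil_1)
  moreover have "dil r a $ 0 \<noteq> 0" using assms by (simp add: dil_nth)
  ultimately show ?thesis
    by (metis fps_inverse_unique mult.commute)
qed

lemma dil_teq: "r > 0 \<Longrightarrow> teq N a b \<Longrightarrow> teq N (dil r a) (dil r b)"
  unfolding teq_def dil_nth
proof (intro allI impI)
  fix i assume r: "r > 0" and h: "\<forall>i\<le>N. a $ i = b $ i" and i: "i \<le> N"
  show "(if r dvd i then a $ (i div r) else 0) = (if r dvd i then b $ (i div r) else 0)"
    using h i r by (auto intro!: h[rule_format] simp: div_le_dividend order_trans[OF div_le_dividend])
qed

lemma dil_1_id[simp]: "dil 1 a = a"
  by (rule fps_ext) (simp add: dil_nth)

lemma bit_of_int_eq_0: "(of_int c :: bit) = 0 \<longleftrightarrow> even c"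
  by (induct c rule: int_induct[where k=0]) auto

lemma bit_sq: "(x::bit) * x = x" by (cases x) auto

lemma bit_cases2: "(x::bit) = 0 \<or> x = 1" by (cases x) auto

lemma bfps_two: "(2 :: bit fps) = 0"
  by (rule fps_ext) (simp add: numeral_fps_const)

lemma bfps_add_sq: "((a::bit fps) + b)^2 = a^2 + b^2"
proof -
  have "(a + b)^2 = a^2 + 2 * a * b + b^2" by (simp add: power2_eq_square algebra_simps)
  then show ?thesis by (simp add: bfps_two)
qed

lemma bfps_sum_sq: "(\<Sum>k\<in>A. (f k :: bit fps))^2 = (\<Sum>k\<in>A. (f k)^2)"
  by (induction A rule: infinite_finite_induct) (auto simp: bfps_add_sq)

lemma bfps_neg: "- (a :: bit fps) = a"
  by (rule fps_ext) simp

lemma bfps_minus: "(a :: bit fps) - b = a + b"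
  by (rule fps_ext) simp

definition tr :: "nat \<Rightarrow> 'a::comm_ring_1 fps \<Rightarrow> 'a fps" where
  "tr N a = (\<Sum>k\<le>N. fps_const (a $ k) * fps_X ^ k)"

lemma tr_teq: "teq N a (tr N a)"
  by (auto simp: teq_def tr_def fps_sum_nth if_distrib sum.delta sum.delta' cong: if_cong)

lemma dil_sum: "dil r (\<Sum>k\<in>A. (f k :: 'a::comm_ring_1 fps)) = (\<Sum>k\<in>A. dil r (f k))"
  by (induction A rule: infinite_finite_induct) (auto simp: dil_add)

lemma dil_const_mult: "r > 0 \<Longrightarrow> dil r (fps_const c * (a :: 'a::comm_ring_1 fps)) = fps_const c * dil r a"
  by (rule fps_ext) (simp add: dil_nth)

lemma frob: "(a :: bit fps)^2 = dil 2 a"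
proof (rule teq_eq)
  fix N
  have 1: "teq N (a^2) ((tr N a)^2)" by (intro teq_power tr_teq)
  have 2: "(tr N a)^2 = (\<Sum>k\<le>N. fps_const (a $ k) * fps_X ^ (2 * k))"
    unfolding tr_def bfps_sum_sq
    by (intro sum.cong refl) (simp add: power_mult_distrib bit_sq power2_eq_square power_mult bit_cases2 flip: fps_const_mult)
  have 3: "(\<Sum>k\<le>N. fps_const (a $ k) * fps_X ^ (2 * k)) = dil 2 (tr N a)"
    unfolding tr_def dil_sum by (intro sum.cong refl) (simp add: dil_const_mult dil_X_power)
  have 4: "teq N (dil 2 (tr N a)) (dil 2 a)"
    by (intro dil_teq teq_sym[OF tr_teq]) auto
  show "teq N (a^2) (dil 2 a)" using 1 2 3 4 teq_trans by metis
qed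

definition psupp :: "bool \<Rightarrow> 'a::zero fps \<Rightarrow> bool" where
  "psupp b a \<longleftrightarrow> (\<forall>n. even n \<noteq> b \<longrightarrow> a $ n = 0)"

lemma psupp_mult:
  fixes x y :: "'a::comm_semiring_1 fps"
  assumes "psupp b1 x" "psupp b2 y"
  shows "psupp (b1 = b2) (x * y)"
  unfolding psupp_def
proof (intro allI impI)
  fix n :: nat assume n: "even n \<noteq> (b1 = b2)"
  show "(x * y) $ n = 0" unfolding fps_mult_nth
  proof (intro sum.neutral ballI)
    fix i assume i: "i \<in> {0..n}"
    show "x $ i * y $ (n - i) = 0"
    proof (cases "even i = b1 \<and> even (n - i) = b2")
      case True
      have "n = i + (n - i)" using i by auto
      then have "even n = (even i = even (n - i))" by (metis even_add)
      then show ?thesis using True n by auto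
    next
      case False
      then show ?thesis using assms unfolding psupp_def by auto
    qed
  qed
qed

lemma psupp_add: "psupp b x \<Longrightarrow> psupp b y \<Longrightarrow> psupp b ((x::'a::monoid_add fps) + y)"
  by (simp add: psupp_def)

lemma psupp_power:
  fixes x :: "'a::comm_semiring_1 fps"
  assumes "psupp True x" shows "psupp True (x ^ k)"
proof (induction k)
  case (Suc k)
  then show ?case using psupp_mult[OF assms Suc] by simp
qed (simp add: psupp_def)

lemma psupp_dil2: "psupp True (dil 2 a)"
  by (simp add: psupp_def dil_nth)

lemma psupp_X_mult: "psupp b a \<Longrightarrow> psupp (\<not> b) (fps_X * (a::'a::comm_ring_1 fps))"
  by (auto simp: psupp_def fps_X_mult_nth)

definition ev :: "'a::zero fps \<Rightarrow> 'a fps" where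
  "ev a = Abs_fps (\<lambda>n. if even n then a $ n else 0)"
definition od :: "'a::zero fps \<Rightarrow> 'a fps" where
  "od a = Abs_fps (\<lambda>n. if odd n then a $ n else 0)"

lemma ev_od: "ev a + od a = (a::'a::monoid_add fps)"
  by (rule fps_ext) (simp add: ev_def od_def)

lemma psupp_ev: "psupp True (ev a)" by (simp add: psupp_def ev_def)
lemma psupp_od: "psupp False (od a)" by (simp add: psupp_def od_def)

lemma ev_psupp: "psupp True a \<Longrightarrow> ev a = a"
  by (rule fps_ext) (auto simp: psupp_def ev_def)
lemma od_psuppT: "psupp True a \<Longrightarrow> od a = 0"
  by (rule fps_ext) (auto simp: psupp_def od_def)
lemma ev_psuppF: "psupp False a \<Longrightarrow> ev a = 0"
  by (rule fps_ext) (auto simp: psupp_def ev_def)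
lemma od_psupp: "psupp False a \<Longrightarrow> od a = a"
  by (rule fps_ext) (auto simp: psupp_def od_def)

lemma ev_add: "ev (a + b) = ev a + ev (b::'a::monoid_add fps)"
  by (rule fps_ext) (simp add: ev_def)
lemma od_add: "od (a + b) = od a + od (b::'a::monoid_add fps)"
  by (rule fps_ext) (simp add: od_def)

lemma ev_mult_even:
  fixes a w :: "'a::comm_semiring_1 fps"
  assumes "psupp True w"
  shows "ev (a * w) = ev a * w" "od (a * w) = od a * w"
proof -
  have e: "psupp True (ev a * w)" using psupp_mult[OF psupp_ev assms] by simp
  have o: "psupp False (od a * w)" using psupp_mult[OF psupp_od assms] by simp
  have "a * w = ev a * w + od a * w" by (metis ev_od distrib_right)
  then show "ev (a * w) = ev a * w" "od (a * w) = od a * w"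
    using e o by (simp_all add: ev_add od_add ev_psupp od_psupp ev_psuppF od_psuppT)
qed

definition red :: "int fps \<Rightarrow> bit fps" where
  "red a = Abs_fps (\<lambda>n. of_int (a $ n))"

lemma red_nth: "red a $ n = of_int (a $ n)" by (simp add: red_def)

lemma red_add: "red (a + b) = red a + red b"
  by (rule fps_ext) (simp add: red_def)
lemma red_diff: "red (a - b) = red a - red b"
  by (rule fps_ext) (simp add: red_def)
lemma red_mult: "red (a * b) = red a * red b"
  by (rule fps_ext) (simp add: red_def fps_mult_nth)
lemma red_1: "red 1 = 1"
  by (rule fps_ext) (simp add: red_def)
lemma red_X_power: "red (fps_X ^ k) = fps_X ^ k"
  by (rule fps_ext) (simp add: red_def)
lemma red_power: "red (a ^ k) = red a ^ k"
  by (induction k) (auto simp: red_1 red_mult)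
lemma red_prod: "red (prod g A) = (\<Prod>j\<in>A. red (g j))"
  by (induction A rule: infinite_finite_induct) (auto simp: red_1 red_mult)
lemma red_ev: "red (ev a) = ev (red a)"
  by (rule fps_ext) (simp add: red_def ev_def)
lemma red_od: "red (od a) = od (red a)"
  by (rule fps_ext) (simp add: red_def od_def)
lemma red_teq: "teq N a b \<Longrightarrow> teq N (red a) (red b)"
  by (simp add: teq_def red_def)

definition pinf :: "(nat \<Rightarrow> 'a::comm_semiring_1 fps) \<Rightarrow> 'a fps" where
  "pinf g = Abs_fps (\<lambda>n. (\<Prod>j\<in>{1..n}. g j) $ n)"

lemma pinf_teq:
  fixes g :: "nat \<Rightarrow> 'a::comm_semiring_1 fps"
  assumes g: "\<And>j. j \<ge> 1 \<Longrightarrow> teq (j - 1) (g j) 1" and NM: "N \<le> M"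
  shows "teq N (pinf g) (\<Prod>j\<in>{1..M}. g j)"
  unfolding teq_def
proof (intro allI impI)
  fix i assume i: "i \<le> N"
  have "teq i (\<Prod>j\<in>{1..M}. g j) (\<Prod>j\<in>{1..i}. g j)"
  proof (rule teq_prod_subset)
    show "{1..i} \<subseteq> {1..M}" using i NM by auto
    fix j assume "j \<in> {1..M} - {1..i}"
    then have "j \<ge> 1" "i \<le> j - 1" by auto
    then show "teq i (g j) 1" using g teq_mono by blast
  qed simp
  then show "pinf g $ i = (\<Prod>j\<in>{1..M}. g j) $ i"
    by (simp add: pinf_def teq_def)
qed

lemma teq_one_minus_X: "j \<ge> 1 \<Longrightarrow> teq (j - 1) (1 - fps_X ^ j :: 'a::comm_ring_1 fps) 1"
  by (auto simp: teq_def)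

definition eul :: "bit fps" where
  "eul = pinf (\<lambda>j. 1 - fps_X ^ j)"

lemma eul_teq: "N \<le> M \<Longrightarrow> teq N eul (\<Prod>j\<in>{1..M}. 1 - fps_X ^ j)"
  unfolding eul_def by (rule pinf_teq[OF teq_one_minus_X])

lemma eul_0: "eul $ 0 = 1"
  using eul_teq[of 0 0] by (simp add: teq_def)

lemma dil_eul_0: "r > 0 \<Longrightarrow> dil r eul $ 0 = 1"
  by (simp add: dil_nth eul_0)

lemma frob_dil: "r > 0 \<Longrightarrow> (dil r (a::bit fps))^2 = dil (2 * r) a"
  by (simp add: frob dil_dil)

lemma frob4: "(a::bit fps)^4 = dil 4 a"
proof -
  have "a^4 = (a^2)^2" by (simp flip: power_mult)
  then show ?thesis by (simp add: frob dil_dil)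
qed

lemma frob4_dil: "r > 0 \<Longrightarrow> (dil r (a::bit fps))^4 = dil (4 * r) a"
  by (simp add: frob4 dil_dil)

section \<open>Jacobi mod 2 via finite triple product\<close>

definition poch :: "nat \<Rightarrow> bit fps" where
  "poch m = (\<Prod>j\<in>{1..m}. 1 - fps_X ^ j)"

lemma poch_Suc: "poch (Suc m) = poch m * (1 - fps_X ^ Suc m)"
  by (simp add: poch_def)

lemma poch_0[simp]: "poch 0 = 1" by (simp add: poch_def)

lemma poch_nth0: "poch m $ 0 = 1"
  by (induction m) (auto simp: poch_Suc)

lemma poch_ne0: "poch m \<noteq> 0"
  using poch_nth0[of m] by auto

lemma poch_teq: "teq m (poch m) eul"
  unfolding poch_def by (rule teq_sym, rule eul_teq) simp

fun Bq :: "nat \<Rightarrow> int \<Rightarrow> bit fps" where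
  "Bq 0 k = (if k = 0 then 1 else 0)"
| "Bq (Suc n) k = (1 + fps_X ^ (2 * n + 1)) * Bq n k
     + fps_X ^ nat (int n + 1 - k) * Bq n (k - 1)
     + fps_X ^ nat (int n + 1 + k) * Bq n (k + 1)"

lemma Bq_zero: "\<bar>k\<bar> > int n \<Longrightarrow> Bq n k = 0"
  by (induction n arbitrary: k) auto

lemma key_poly_identity:
  fixes x A B :: "'a::comm_ring_1"
  shows "(1 + x*(A*B))*((1 - x*A)*(1 - x*B)) + x*B*((1 - A)*(1 - x*A)) + x*A*((1 - B)*(1 - x*B))
       = (1 - x*(A*B))*(1 - x*(x*(A*B)))"
  by (simp add: algebra_simps)

lemma key_poly2:
  fixes x A B P :: "'a::comm_ring_1"
  shows "(1 + x*(A*B))*((1 - x*A)*(1 - x*B)*P) + x*B*((1 - A)*(1 - x*A)*P) + x*A*((1 - B)*(1 - x*B)*P)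
       = P*((1 - x*(A*B))*(1 - x*(x*(A*B))))"
proof -
  have "(1 + x*(A*B))*((1 - x*A)*(1 - x*B)*P) + x*B*((1 - A)*(1 - x*A)*P) + x*A*((1 - B)*(1 - x*B)*P)
     = P * ((1 + x*(A*B))*((1 - x*A)*(1 - x*B)) + x*B*((1 - A)*(1 - x*A)) + x*A*((1 - B)*(1 - x*B)))"
    by (simp add: algebra_simps)
  then show ?thesis by (simp only: key_poly_identity)
qed

lemma distrib3:
  fixes Q u v w B1 B2 B3 :: "'a::comm_ring_1"
  shows "Q * (u*B1 + v*B2 + w*B3) = u*(Q*B1) + v*(Q*B2) + w*(Q*B3)"
  by (simp add: algebra_simps)

lemma Bq_form: "\<bar>k\<bar> \<le> int n \<Longrightarrow> poch (nat (int n + k)) * poch (nat (int n - k)) * Bq n k = poch (2 * n)"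
proof (induction n arbitrary: k)
  case 0
  then show ?case by simp
next
  case (Suc n)
  have Bnn: "Bq n (int n) = 1"
  proof -
    have "poch (2 * n) * poch 0 * Bq n (int n) = poch (2 * n)"
      using Suc.IH[of "int n"] by (simp add: nat_mult_distrib flip: of_nat_add mult_2)
    then show ?thesis using poch_ne0[of "2*n"] by simp
  qed
  have Bmnn: "Bq n (- int n) = 1"
  proof -
    have "poch 0 * poch (2 * n) * Bq n (- int n) = poch (2 * n)"
      using Suc.IH[of "- int n"] by (simp add: nat_mult_distrib flip: of_nat_add mult_2)
    then show ?thesis using poch_ne0[of "2*n"] by simp
  qed
  consider "k = int n + 1" | "k = - int n - 1" | "\<bar>k\<bar> \<le> int n" using Suc.prems by linarith
  then show ?case
  proof cases
    case 1
    have "Bq (Suc n) k = Bq n (int n)" using 1 by (simp add: Bq_zero)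
    then have "Bq (Suc n) k = 1" using Bnn by simp
    moreover have "nat (int (Suc n) + k) = 2 * Suc n" "nat (int (Suc n) - k) = 0" using 1 by simp_all
    ultimately show ?thesis by simp
  next
    case 2
    have "Bq (Suc n) k = Bq n (- int n)" using 2 by (simp add: Bq_zero)
    then have "Bq (Suc n) k = 1" using Bmnn by simp
    moreover have "nat (int (Suc n) + k) = 0" "nat (int (Suc n) - k) = 2 * Suc n" using 2 by simp_all
    ultimately show ?thesis by simp
  next
    case 3
    define a where "a = nat (int n + k)"
    define b where "b = nat (int n - k)"
    have ab: "a + b = 2 * n" using 3 by (simp add: a_def b_def)
    have e1: "nat (int (Suc n) + k) = Suc a" "nat (int (Suc n) - k) = Suc b"
      using 3 by (simp_all add: a_def b_def)
    have e2: "nat (int n + 1 - k) = Suc b" "nat (int n + 1 + k) = Suc a"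
      using 3 by (simp_all add: a_def b_def)
    define P where "P = poch (2 * n)"
    have t1: "poch (Suc a) * poch (Suc b) * Bq n k = (1 - fps_X ^ Suc a) * (1 - fps_X ^ Suc b) * P"
    proof -
      have "poch a * poch b * Bq n k = P" using Suc.IH[OF 3] unfolding P_def a_def b_def .
      then show ?thesis unfolding poch_Suc by (simp add: mult_ac)
    qed
    have t2: "poch (Suc a) * poch (Suc b) * Bq n (k - 1) = (1 - fps_X ^ a) * (1 - fps_X ^ Suc a) * P"
    proof (cases "a = 0")
      case True
      then have "\<bar>k - 1\<bar> > int n" using 3 by (simp add: a_def)
      then show ?thesis using True by (simp add: Bq_zero)
    next
      case False
      then obtain a' where a': "a = Suc a'" by (cases a) auto
      have "\<bar>k - 1\<bar> \<le> int n" "nat (int n + (k - 1)) = a'" "nat (int n - (k - 1)) = Suc b"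
        using 3 a' by (auto simp: a_def b_def)
      then have "poch a' * poch (Suc b) * Bq n (k - 1) = P"
        using Suc.IH[of "k - 1"] by (simp add: P_def)
      then show ?thesis unfolding a' poch_Suc by (simp add: mult_ac)
    qed
    have t3: "poch (Suc a) * poch (Suc b) * Bq n (k + 1) = (1 - fps_X ^ b) * (1 - fps_X ^ Suc b) * P"
    proof (cases "b = 0")
      case True
      then have "\<bar>k + 1\<bar> > int n" using 3 by (simp add: b_def)
      then show ?thesis using True by (simp add: Bq_zero)
    next
      case False
      then obtain b' where b': "b = Suc b'" by (cases b) auto
      have "\<bar>k + 1\<bar> \<le> int n" "nat (int n + (k + 1)) = Suc a" "nat (int n - (k + 1)) = b'"
        using 3 b' by (auto simp: a_def b_def)
      then have "poch (Suc a) * poch b' * Bq n (k + 1) = P"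
        using Suc.IH[of "k + 1"] by (simp add: P_def)
      then show ?thesis unfolding b' poch_Suc by (simp add: mult_ac)
    qed
    have x1: "(fps_X :: bit fps) ^ (2 * n + 1) = fps_X * (fps_X ^ a * fps_X ^ b)"
      by (simp flip: power_add ab add: power_Suc)
    have "poch (Suc a) * poch (Suc b) * Bq (Suc n) k =
        (1 + fps_X ^ (2 * n + 1)) * (poch (Suc a) * poch (Suc b) * Bq n k)
      + fps_X ^ Suc b * (poch (Suc a) * poch (Suc b) * Bq n (k - 1))
      + fps_X ^ Suc a * (poch (Suc a) * poch (Suc b) * Bq n (k + 1))"
      by (simp only: Bq.simps e2 distrib3)
    also have "\<dots> = (1 + fps_X * (fps_X ^ a * fps_X ^ b)) * ((1 - fps_X * fps_X ^ a) * (1 - fps_X * fps_X ^ b) * P)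
        + fps_X * fps_X ^ b * ((1 - fps_X ^ b) * (1 - fps_X * fps_X ^ b) * P) * 0
        + fps_X * fps_X ^ b * ((1 - fps_X ^ a) * (1 - fps_X * fps_X ^ a) * P)
        + fps_X * fps_X ^ a * ((1 - fps_X ^ b) * (1 - fps_X * fps_X ^ b) * P)"
      unfolding t1 t2 t3 x1 by (simp only: power_Suc mult_zero_right add_0_right)
    also have "\<dots> = P * ((1 - fps_X * (fps_X ^ a * fps_X ^ b)) * (1 - fps_X * (fps_X * (fps_X ^ a * fps_X ^ b))))"
      by (simp only: key_poly2 mult_zero_right add_0_right)
    also have "\<dots> = poch (2 * Suc n)"
    proof -
      have "2 * Suc n = Suc (Suc (2 * n))" by simp
      moreover have "(fps_X::bit fps) * (fps_X ^ a * fps_X ^ b) = fps_X ^ Suc (2 * n)"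
        by (simp flip: power_add ab add: power_Suc)
      ultimately show ?thesis by (simp only: P_def poch_Suc power_Suc mult.assoc)
    qed
    finally show ?thesis using e1 by simp
  qed
qed


lemma teq_sum:
  fixes f g :: "'b \<Rightarrow> 'a::comm_monoid_add fps"
  shows "(\<And>k. k \<in> A \<Longrightarrow> teq N (f k) (g k)) \<Longrightarrow> teq N (sum f A) (sum g A)"
  by (auto simp: teq_def fps_sum_nth intro!: sum.cong)

lemma teq_X_high: "e > D \<Longrightarrow> teq D (a * fps_X ^ e :: 'a::comm_ring_1 fps) 0"
  by (auto simp: teq_def fps_X_power_mult_right_nth)

lemma eul_ne0: "eul $ 0 \<noteq> 0" by (simp add: eul_0)

lemma B_lim:
  assumes k: "\<bar>k\<bar> \<le> int n"
  shows "teq (n - nat \<bar>k\<bar>) (Bq n k) (inverse eul)"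
proof -
  define d where "d = n - nat \<bar>k\<bar>"
  have da: "d \<le> nat (int n + k)" and db: "d \<le> nat (int n - k)" and dn: "d \<le> 2 * n"
    using k by (auto simp: d_def)
  have 1: "teq d (poch (nat (int n + k)) * poch (nat (int n - k)) * Bq n k) (eul * eul * Bq n k)"
    by (intro teq_mult teq_mono[OF poch_teq] da db) auto
  have 2: "teq d (poch (2 * n)) eul" by (rule teq_mono[OF poch_teq dn])
  have 3: "teq d (eul * eul * Bq n k) eul"
    using 1 2 Bq_form[OF k] by (metis teq_sym teq_trans)
  have "teq d (inverse eul * inverse eul * (eul * eul * Bq n k)) (inverse eul * inverse eul * eul)"
    by (rule teq_mult_left[OF 3])
  moreover have "inverse eul * inverse eul * (eul * eul * Bq n k) = (inverse eul * eul) * ((inverse eul * eul) * Bq n k)"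
    by (simp only: mult_ac)
  moreover have "(inverse eul * eul) * ((inverse eul * eul) * Bq n k) = Bq n k"
    using inverse_mult_eq_1[OF eul_ne0] by simp
  moreover have "inverse eul * inverse eul * eul = inverse eul"
    using inverse_mult_eq_1[OF eul_ne0] by (simp add: mult.assoc)
  ultimately show ?thesis by (simp add: d_def)
qed

definition ee :: "int \<Rightarrow> nat" where "ee k = nat (2 * k * k + k)"

lemma ee_nonneg: "0 \<le> 2 * k * k + (k::int)"
proof (cases "k \<ge> 0")
  case True then show ?thesis by simp
next
  case False
  then have "k * (2 * k + 1) \<ge> 0" by (intro mult_nonpos_nonpos) auto
  then show ?thesis by (simp add: algebra_simps)
qed

lemma ee_int: "int (ee k) = 2 * k * k + k"
  using ee_nonneg[of k] by (simp add: ee_def)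

lemma ee_ge_abs: "\<bar>k\<bar> \<le> int (ee k)"
proof (cases "k \<ge> 0")
  case True
  then have "k \<le> k * k" by (cases "k = 0") (auto simp: mult_le_cancel_left1)
  then show ?thesis using True by (simp add: ee_int)
next
  case False
  then have "(-k) * 1 \<le> (-k) * (-k)" by (intro mult_left_mono) auto
  then have "-k \<le> k * k" by simp
  then show ?thesis using False by (simp add: ee_int)
qed

lemma ee_inj: "ee k = ee l \<Longrightarrow> k = l"
proof -
  assume "ee k = ee l"
  then have "2 * k * k + k = 2 * l * l + l" using ee_int by metis
  then have "(k - l) * (2 * k + 2 * l + 1) = 0" by (simp add: algebra_simps)
  moreover have "2 * k + 2 * l + 1 \<noteq> 0" by presburger
  ultimately show "k = l" by simp
qed

definition psi :: "bit fps" where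
  "psi = Abs_fps (\<lambda>m. if (\<exists>t::nat. m = t * (t + 1) div 2) then 1 else 0)"

lemma tri_iff: "(\<exists>t::nat. m = t * (t + 1) div 2) \<longleftrightarrow> (\<exists>k. ee k = m)"
proof
  assume "\<exists>t::nat. m = t * (t + 1) div 2"
  then obtain t :: nat where t: "m = t * (t + 1) div 2" by blast
  show "\<exists>k. ee k = m"
  proof (cases "even t")
    case True
    then obtain s where s: "t = 2 * s" by (auto elim: evenE)
    have "m = s * (2 * s + 1)" using t s by simp
    then have "int m = 2 * int s * int s + int s" by (simp add: algebra_simps)
    then show ?thesis using ee_int by (metis of_nat_eq_iff)
  next
    case False
    then obtain s where s: "t = 2 * s + 1" by (auto elim: oddE)
    have "t * (t + 1) = 2 * ((2 * s + 1) * (s + 1))" using s by (simp add: algebra_simps)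
    then have "m = (2 * s + 1) * (s + 1)" using t by simp
    then have "int m = 2 * (- int s - 1) * (- int s - 1) + (- int s - 1)" by (simp add: algebra_simps)
    then show ?thesis using ee_int by (metis of_nat_eq_iff)
  qed
next
  assume "\<exists>k. ee k = m"
  then obtain k where k: "ee k = m" by blast
  show "\<exists>t::nat. m = t * (t + 1) div 2"
  proof (cases "k \<ge> 0")
    case True
    define t where "t = nat (2 * k)"
    have "int (t * (t + 1)) = 2 * int m" using True k ee_int[of k] by (simp add: t_def algebra_simps)
    then have "t * (t + 1) = 2 * m" by linarith
    then show ?thesis by (intro exI[of _ t]) simp
  next
    case False
    define t where "t = nat (- 2 * k - 1)"
    have "int (t * (t + 1)) = 2 * int m" using False k ee_int[of k] by (simp add: t_def algebra_simps)
    then have "t * (t + 1) = 2 * m" by linarith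
    then show ?thesis by (intro exI[of _ t]) simp
  qed
qed

lemma psi_teq:
  assumes "D \<le> n"
  shows "teq D psi (\<Sum>k\<in>{- int n..int n}. fps_X ^ ee k)"
  unfolding teq_def
proof (intro allI impI)
  fix i assume i: "i \<le> D"
  show "psi $ i = (\<Sum>k\<in>{- int n..int n}. fps_X ^ ee k) $ i"
  proof (cases "\<exists>k. ee k = i")
    case True
    then obtain k0 where k0: "ee k0 = i" by blast
    have "\<bar>k0\<bar> \<le> int n" using ee_ge_abs[of k0] k0 i assms by linarith
    have "(\<Sum>k\<in>{- int n..int n}. fps_X ^ ee k) $ i = (\<Sum>k\<in>{- int n..int n}. (if k = k0 then 1 else 0 :: bit))"
      unfolding fps_sum_nth by (intro sum.cong refl) (auto simp: k0[symmetric] dest: ee_inj)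
    also have "\<dots> = 1" using \<open>\<bar>k0\<bar> \<le> int n\<close> by (simp add: sum.delta' abs_le_iff)
    moreover have "psi $ i = (if \<exists>t::nat. i = t * (t + 1) div 2 then 1 else 0)"
      by (simp only: psi_def fps_nth_Abs_fps)
    moreover have "\<exists>t::nat. i = t * (t + 1) div 2" using True tri_iff by blast
    ultimately show ?thesis by simp
  next
    case False
    have "(\<Sum>k\<in>{- int n..int n}. fps_X ^ ee k) $ i = 0"
      unfolding fps_sum_nth using False by (intro sum.neutral) auto
    moreover have "psi $ i = (if \<exists>t::nat. i = t * (t + 1) div 2 then 1 else 0)"
      by (simp only: psi_def fps_nth_Abs_fps)
    moreover have "\<not> (\<exists>t::nat. i = t * (t + 1) div 2)" using False tri_iff by blast
    ultimately show ?thesis by simp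
  qed
qed

lemma dil4_1: "dil 4 (1::bit fps) = 1"
  by (rule fps_ext) (auto simp: dil_nth elim!: dvdE)

definition SS :: "nat \<Rightarrow> bit fps" where
  "SS n = (\<Sum>k\<in>{- int n..int n}. dil 4 (Bq n k) * fps_X ^ ee k)"

lemma sum_extend_int:
  fixes F :: "int \<Rightarrow> 'a::comm_monoid_add"
  assumes "\<And>k. \<bar>k\<bar> > int n \<Longrightarrow> F k = 0" "a \<le> - int n" "int n \<le> b"
  shows "(\<Sum>k\<in>{a..b}. F k) = (\<Sum>k\<in>{- int n..int n}. F k)"
  using assms by (intro sum.mono_neutral_right) auto

lemma sum_shift_int:
  fixes F :: "int \<Rightarrow> 'a::comm_monoid_add"
  shows "(\<Sum>k\<in>{a..b}. F (k + c)) = (\<Sum>k\<in>{a + c..b + c}. F k)"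
proof -
  have "(\<Sum>k\<in>{a + c..b + c}. F k) = (\<Sum>k\<in>(\<lambda>k. k + c) ` {a..b}. F k)" by simp
  also have "\<dots> = (\<Sum>k\<in>{a..b}. F (k + c))" by (subst sum.reindex) (auto simp: inj_on_def)
  finally show ?thesis by simp
qed

lemma SS_Suc: "SS (Suc n) = (1 + fps_X ^ (4 * n + 1)) * (1 + fps_X ^ (4 * n + 3)) * SS n"
proof -
  define F where "F k = dil 4 (Bq n k) * fps_X ^ ee k" for k
  have Fz: "\<And>k. \<bar>k\<bar> > int n \<Longrightarrow> F k = 0" by (simp add: F_def Bq_zero)
  have SSn: "SS n = (\<Sum>k\<in>{- int n..int n}. F k)" by (simp add: SS_def F_def)
  let ?I = "{- int (Suc n)..int (Suc n)}"
  have term2: "fps_X ^ (4 * nat (int n + 1 - k)) * dil 4 (Bq n (k - 1)) * fps_X ^ ee k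
      = fps_X ^ (4 * n + 3) * F (k + (-1))" if "k \<in> ?I" for k
  proof (cases "\<bar>k - 1\<bar> \<le> int n")
    case True
    have "int (4 * nat (int n + 1 - k) + ee k) = int (4 * n + 3 + ee (k - 1))"
      using True by (simp add: ee_int algebra_simps)
    then have E: "4 * nat (int n + 1 - k) + ee k = 4 * n + 3 + ee (k + (-1))" by (simp only: of_nat_eq_iff) simp
    have "fps_X ^ (4 * nat (int n + 1 - k)) * dil 4 (Bq n (k - 1)) * fps_X ^ ee k
       = dil 4 (Bq n (k - 1)) * fps_X ^ (4 * nat (int n + 1 - k) + ee k)"
      by (simp only: power_add mult_ac)
    also have "\<dots> = dil 4 (Bq n (k - 1)) * fps_X ^ (4 * n + 3 + ee (k + (-1)))" by (simp only: E)
    also have "\<dots> = fps_X ^ (4 * n + 3) * F (k + (-1))" by (simp only: F_def power_add mult_ac) simp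
    finally show ?thesis .
  next
    case False
    then show ?thesis by (simp add: F_def Bq_zero)
  qed
  have term3: "fps_X ^ (4 * nat (int n + 1 + k)) * dil 4 (Bq n (k + 1)) * fps_X ^ ee k
      = fps_X ^ (4 * n + 1) * F (k + 1)" if "k \<in> ?I" for k
  proof (cases "\<bar>k + 1\<bar> \<le> int n")
    case True
    have "int (4 * nat (int n + 1 + k) + ee k) = int (4 * n + 1 + ee (k + 1))"
      using True by (simp add: ee_int algebra_simps)
    then have E: "4 * nat (int n + 1 + k) + ee k = 4 * n + 1 + ee (k + 1)" by (simp only: of_nat_eq_iff)
    have "fps_X ^ (4 * nat (int n + 1 + k)) * dil 4 (Bq n (k + 1)) * fps_X ^ ee k
       = dil 4 (Bq n (k + 1)) * fps_X ^ (4 * nat (int n + 1 + k) + ee k)"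
      by (simp only: power_add mult_ac)
    also have "\<dots> = dil 4 (Bq n (k + 1)) * fps_X ^ (4 * n + 1 + ee (k + 1))" by (simp only: E)
    also have "\<dots> = fps_X ^ (4 * n + 1) * F (k + 1)" by (simp only: F_def power_add mult_ac)
    finally show ?thesis .
  next
    case False
    then show ?thesis by (simp add: F_def Bq_zero)
  qed
  have "SS (Suc n) = (\<Sum>k\<in>?I. (1 + fps_X ^ (8 * n + 4)) * F k
      + fps_X ^ (4 * n + 3) * F (k + (-1)) + fps_X ^ (4 * n + 1) * F (k + 1))"
    unfolding SS_def
  proof (intro sum.cong refl)
    fix k assume k: "k \<in> ?I"
    have d4: "dil 4 (1 + fps_X ^ (2 * n + 1) :: bit fps) = 1 + fps_X ^ (8 * n + 4)"
    proof -
      have "dil 4 (1 + fps_X ^ (2 * n + 1) :: bit fps) = 1 + fps_X ^ (4 * (2 * n + 1))"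
        by (simp only: dil_add dil_1[of 4] dil_X_power[of 4] zero_less_numeral)
      also have "4 * (2 * n + 1) = 8 * n + 4" by simp
      finally show ?thesis .
    qed
    have "dil 4 (Bq (Suc n) k) * fps_X ^ ee k =
        (1 + fps_X ^ (8 * n + 4)) * F k
      + fps_X ^ (4 * nat (int n + 1 - k)) * dil 4 (Bq n (k - 1)) * fps_X ^ ee k
      + fps_X ^ (4 * nat (int n + 1 + k)) * dil 4 (Bq n (k + 1)) * fps_X ^ ee k"
      unfolding Bq.simps dil_mult[OF zero_less_numeral] d4 dil_add dil_X_power[OF zero_less_numeral]
      by (simp add: F_def algebra_simps dil4_1)
    then show "dil 4 (Bq (Suc n) k) * fps_X ^ ee k = (1 + fps_X ^ (8 * n + 4)) * F k
      + fps_X ^ (4 * n + 3) * F (k + (-1)) + fps_X ^ (4 * n + 1) * F (k + 1)"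
      using term2[OF k] term3[OF k] by simp
  qed
  also have "\<dots> = (1 + fps_X ^ (8 * n + 4)) * (\<Sum>k\<in>?I. F k)
      + fps_X ^ (4 * n + 3) * (\<Sum>k\<in>?I. F (k + (-1))) + fps_X ^ (4 * n + 1) * (\<Sum>k\<in>?I. F (k + 1))"
    by (simp add: sum.distrib sum_distrib_left)
  also have "(\<Sum>k\<in>?I. F k) = SS n"
    unfolding SSn by (rule sum_extend_int[OF Fz]) auto
  also have "(\<Sum>k\<in>?I. F (k + (-1))) = SS n"
    unfolding SSn sum_shift_int by (rule sum_extend_int[OF Fz]) auto
  also have "(\<Sum>k\<in>?I. F (k + 1)) = SS n"
    unfolding SSn sum_shift_int by (rule sum_extend_int[OF Fz]) auto
  finally have "SS (Suc n) = (1 + fps_X ^ (8 * n + 4) + fps_X ^ (4 * n + 3) + fps_X ^ (4 * n + 1)) * SS n"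
    by (simp add: algebra_simps)
  also have "1 + fps_X ^ (8 * n + 4) + fps_X ^ (4 * n + 3) + fps_X ^ (4 * n + 1) =
     (1 + fps_X ^ (4 * n + 1)) * (1 + (fps_X::bit fps) ^ (4 * n + 3))"
  proof -
    have "(8 * n + 4) = (4 * n + 1) + (4 * n + 3)" by simp
    then have "(fps_X::bit fps) ^ (8 * n + 4) = fps_X ^ (4 * n + 1) * fps_X ^ (4 * n + 3)"
      by (metis power_add)
    then show ?thesis by (simp add: algebra_simps)
  qed
  finally show ?thesis .
qed

definition Po :: "nat \<Rightarrow> bit fps" where
  "Po n = (\<Prod>j<n. (1 + fps_X ^ (4 * j + 1)) * (1 + fps_X ^ (4 * j + 3)))"

lemma SS_Po: "SS n = Po n"
proof (induction n)
  case 0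
  then show ?case by (simp add: SS_def Po_def dil_1 ee_def)
next
  case (Suc n)
  then show ?case by (simp add: SS_Suc Po_def mult_ac)
qed

lemma dil_one_minus: "r > 0 \<Longrightarrow> dil r (1 - fps_X ^ j :: 'a::comm_ring_1 fps) = 1 - fps_X ^ (r * j)"
  by (simp add: dil_diff dil_1 dil_X_power)

lemma Po_poch: "Po n * dil 2 (poch (2 * n)) = poch (4 * n)"
proof (induction n)
  case 0
  then show ?case by (simp add: Po_def dil_1)
next
  case (Suc n)
  have e1: "2 * Suc n = Suc (Suc (2 * n))" "4 * Suc n = Suc (Suc (Suc (Suc (4 * n))))" by simp_all
  have A: "dil 2 (poch (2 * Suc n)) = dil 2 (poch (2 * n)) * ((1 - fps_X ^ (4 * n + 2)) * (1 - fps_X ^ (4 * n + 4)))"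
  proof -
    have X: "dil 2 (poch (2 * Suc n)) = dil 2 (poch (2 * n)) * ((1 - fps_X ^ (2 * Suc (2 * n))) * (1 - fps_X ^ (2 * Suc (Suc (2 * n)))))"
      unfolding e1 poch_Suc by (simp only: dil_mult[OF zero_less_numeral] dil_one_minus[OF zero_less_numeral] mult.assoc)
    have q1: "2 * Suc (2 * n) = 4 * n + 2" and q2: "2 * Suc (Suc (2 * n)) = 4 * n + 4" by simp_all
    show ?thesis using X unfolding q1 q2 .
  qed
  have B: "poch (4 * Suc n) = poch (4 * n) * ((1 - fps_X ^ (4 * n + 1)) * (1 - fps_X ^ (4 * n + 2)) * (1 - fps_X ^ (4 * n + 3)) * (1 - fps_X ^ (4 * n + 4)))"
  proof -
    have X: "poch (4 * Suc n) = poch (4 * n) * ((1 - fps_X ^ Suc (4 * n)) * (1 - fps_X ^ Suc (Suc (4 * n))) * (1 - fps_X ^ Suc (Suc (Suc (4 * n)))) * (1 - fps_X ^ Suc (Suc (Suc (Suc (4 * n))))))"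
      unfolding e1 poch_Suc by (simp only: mult.assoc)
    have q: "Suc (4 * n) = 4 * n + 1" "Suc (4 * n + 1) = 4 * n + 2" "Suc (4 * n + 2) = 4 * n + 3"
      "Suc (4 * n + 3) = 4 * n + 4" by simp_all
    show ?thesis using X unfolding q .
  qed
  have C: "Po (Suc n) = Po n * ((1 - fps_X ^ (4 * n + 1)) * (1 - fps_X ^ (4 * n + 3)))"
    by (simp add: Po_def bfps_minus)
  have "Po (Suc n) * dil 2 (poch (2 * Suc n)) =
     (Po n * dil 2 (poch (2 * n))) * ((1 - fps_X ^ (4 * n + 1)) * (1 - fps_X ^ (4 * n + 2)) * (1 - fps_X ^ (4 * n + 3)) * (1 - fps_X ^ (4 * n + 4)))"
    unfolding A C by (simp only: mult_ac)
  also have "\<dots> = poch (4 * Suc n)"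
    unfolding Suc.IH B ..
  finally show ?case .
qed

lemma Po_teq: "D \<le> 2 * n \<Longrightarrow> teq D (Po n) (eul * inverse (dil 2 eul))"
proof -
  assume D: "D \<le> 2 * n"
  have d0: "dil 2 eul $ 0 \<noteq> 0" by (simp add: dil_nth eul_0)
  have "teq D (Po n * dil 2 (poch (2 * n))) (Po n * dil 2 eul)"
    by (intro teq_mult_left dil_teq teq_mono[OF poch_teq D]) auto
  moreover have "teq D (poch (4 * n)) eul" by (rule teq_mono[OF poch_teq]) (use D in auto)
  ultimately have "teq D (Po n * dil 2 eul) eul" using Po_poch by (metis teq_sym teq_trans)
  then have "teq D (Po n * dil 2 eul * inverse (dil 2 eul)) (eul * inverse (dil 2 eul))"
    by (intro teq_mult) auto
  then show ?thesis using d0 by (simp add: mult.assoc inverse_mult_eq_1')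
qed

lemma SS_teq: "teq D (SS (2 * D)) (dil 4 (inverse eul) * psi)"
proof -
  let ?n = "2 * D"
  have "teq D (SS ?n) (\<Sum>k\<in>{- int ?n..int ?n}. dil 4 (inverse eul) * fps_X ^ ee k)"
    unfolding SS_def
  proof (intro teq_sum)
    fix k assume k: "k \<in> {- int ?n..int ?n}"
    show "teq D (dil 4 (Bq ?n k) * fps_X ^ ee k) (dil 4 (inverse eul) * fps_X ^ ee k)"
    proof (cases "ee k \<le> D")
      case True
      then have "\<bar>k\<bar> \<le> int D" using ee_ge_abs[of k] by linarith
      then have "teq D (Bq ?n k) (inverse eul)"
        using B_lim[of k ?n] by (intro teq_mono[OF B_lim]) auto
      then show ?thesis by (intro teq_mult dil_teq) auto
    next
      case False
      then show ?thesis using teq_X_high[of D "ee k"] by (metis not_le teq_sym teq_trans)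
    qed
  qed
  also have "(\<Sum>k\<in>{- int ?n..int ?n}. dil 4 (inverse eul) * fps_X ^ ee k) =
      dil 4 (inverse eul) * (\<Sum>k\<in>{- int ?n..int ?n}. fps_X ^ ee k)"
    by (simp add: sum_distrib_left)
  finally have 1: "teq D (SS ?n) (dil 4 (inverse eul) * (\<Sum>k\<in>{- int ?n..int ?n}. fps_X ^ ee k))" .
  have 2: "teq D (dil 4 (inverse eul) * (\<Sum>k\<in>{- int ?n..int ?n}. fps_X ^ ee k)) (dil 4 (inverse eul) * psi)"
    by (intro teq_mult_left teq_sym[OF psi_teq]) auto
  show ?thesis using 1 2 teq_trans by blast
qed

theorem jacobi2: "eul ^ 3 = psi"
proof -
  have main: "dil 4 (inverse eul) * psi = eul * inverse (dil 2 eul)"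
  proof (rule teq_eq)
    fix D
    have "teq D (SS (2 * D)) (eul * inverse (dil 2 eul))"
      unfolding SS_Po by (rule Po_teq) simp
    then show "teq D (dil 4 (inverse eul) * psi) (eul * inverse (dil 2 eul))"
      using SS_teq[of D] by (metis teq_sym teq_trans)
  qed
  have e4: "dil 4 (inverse eul) = inverse (eul ^ 4)"
    by (simp add: dil_inverse eul_ne0 frob4)
  have e2: "dil 2 eul = eul ^ 2" by (simp add: frob)
  have u4: "inverse (eul ^ 4) * eul ^ 4 = 1" and u2: "eul ^ 2 * inverse (eul ^ 2) = 1"
    by (simp_all add: inverse_mult_eq_1 inverse_mult_eq_1' eul_0 fps_nth_power_0)
  have "psi = eul ^ 4 * (inverse (eul ^ 4) * psi)"
    using u4 by (simp add: mult.assoc[symmetric] mult.commute[of "eul^4"])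
  also have "\<dots> = eul ^ 4 * (eul * inverse (eul ^ 2))" using main e4 e2 by simp
  also have "\<dots> = eul ^ 3 * (eul ^ 2 * inverse (eul ^ 2))"
    by (simp add: power_numeral_reduce mult_ac)
  also have "\<dots> = eul ^ 3" using u2 by simp
  finally show ?thesis by simp
qed

section \<open>The quadratic form x^2 + 3y^2 and an involution\<close>

definition Pset :: "int \<Rightarrow> (int \<times> int) set" where
  "Pset M = {(x, y). x > 0 \<and> y > 0 \<and> odd x \<and> odd y \<and> x * x + 3 * (y * y) = 4 * M}"

definition iota :: "int \<times> int \<Rightarrow> int \<times> int" where
  "iota p = (if (fst p - snd p) mod 4 = 0 then (\<bar>fst p - 3 * snd p\<bar> div 2, (fst p + snd p) div 2)
             else ((fst p + 3 * snd p) div 2, \<bar>fst p - snd p\<bar> div 2))"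

lemma iota1: "(x - y) mod 4 = 0 \<Longrightarrow> iota (x, y) = (\<bar>x - 3 * y\<bar> div 2, (x + y) div 2)"
  by (simp add: iota_def)
lemma iota2: "(x - y) mod 4 \<noteq> 0 \<Longrightarrow> iota (x, y) = ((x + 3 * y) div 2, \<bar>x - y\<bar> div 2)"
  by (simp add: iota_def)

lemma Pset_finite: "finite (Pset M)"
proof -
  have "Pset M \<subseteq> {0..4*M} \<times> {0..4*M}"
  proof
    fix p assume "p \<in> Pset M"
    then obtain x y where p: "p = (x, y)" "x > 0" "y > 0" "x * x + 3 * (y * y) = 4 * M"
      by (auto simp: Pset_def)
    have "x \<le> x * x" "y \<le> y * y" using p by (simp_all add: mult_le_cancel_left1)
    moreover have "0 \<le> x * x" "0 \<le> y * y" by simp_all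
    ultimately have "x \<le> 4 * M" "y \<le> 4 * M" using p(4) by linarith+
    then show "p \<in> {0..4*M} \<times> {0..4*M}" using p by auto
  qed
  then show ?thesis by (rule finite_subset) auto
qed

lemma norm_rot1: "(x - 3 * y) * (x - 3 * y) + 3 * ((x + y) * (x + y)) = 4 * (x * x + 3 * (y * y))"
  for x y :: int by (simp add: algebra_simps)
lemma norm_rot2: "(x + 3 * y) * (x + 3 * y) + 3 * ((x - y) * (x - y)) = 4 * (x * x + 3 * (y * y))"
  for x y :: int by (simp add: algebra_simps)

lemma iota_props:
  assumes p: "p \<in> Pset M"
  shows "iota p \<in> Pset M \<and> iota (iota p) = p"
proof -
  obtain x y where xy: "p = (x, y)" "x > 0" "y > 0" "odd x" "odd y" "x * x + 3 * (y * y) = 4 * M"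
    using p by (auto simp: Pset_def)
  obtain a where a: "x = 2 * a + 1" using xy(4) by (auto elim: oddE)
  obtain b where b: "y = 2 * b + 1" using xy(5) by (auto elim: oddE)
  have a0: "a \<ge> 0" "b \<ge> 0" using xy a b by auto
  show ?thesis
  proof (cases "even (a - b)")
    case True
    define c where "c = (a - b) div 2"
    have c: "a = b + 2 * c" using True unfolding c_def by simp
    have m0: "(x - y) mod 4 = 0" using a b c by simp
    have s1: "x + y = 2 * (2 * b + 2 * c + 1)" using a b c by simp
    have s2: "x - 3 * y = 2 * (2 * c - 2 * b - 1)" using a b c by simp
    have ip: "iota p = (\<bar>2 * c - 2 * b - 1\<bar>, 2 * b + 2 * c + 1)"
      unfolding xy(1) iota1[OF m0] s1 s2 by (simp add: abs_mult)
    have inP: "iota p \<in> Pset M"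
    proof -
      have "\<bar>2 * c - 2 * b - 1\<bar> * \<bar>2 * c - 2 * b - 1\<bar> + 3 * ((2 * b + 2 * c + 1) * (2 * b + 2 * c + 1)) = 4 * M"
      proof -
        have "4 * ((2 * c - 2 * b - 1) * (2 * c - 2 * b - 1) + 3 * ((2 * b + 2 * c + 1) * (2 * b + 2 * c + 1)))
            = 4 * (4 * M)" using norm_rot1[of x y] unfolding s1 s2 xy(6) by (simp add: algebra_simps)
        then show ?thesis by (simp add: abs_mult_self_eq)
      qed
      moreover have "odd (\<bar>2 * c - 2 * b - 1\<bar>)" "odd (2 * b + 2 * c + 1)" by simp_all
      moreover have "2 * c - 2 * b - 1 \<noteq> 0" by presburger
      then have "\<bar>2 * c - 2 * b - 1\<bar> > 0" by simp
      moreover have "2 * b + 2 * c + 1 > 0" using a0 c by auto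
      ultimately show ?thesis unfolding ip Pset_def by simp
    qed
    have "iota (iota p) = p"
    proof (cases "c > b")
      case True
      have ip': "iota p = (2 * c - 2 * b - 1, 2 * b + 2 * c + 1)" using ip True by simp
      have m1: "((2 * c - 2 * b - 1) - (2 * b + 2 * c + 1)) mod 4 \<noteq> 0" by presburger
      show ?thesis unfolding ip' iota2[OF m1] using xy(1) a b c a0 by simp
    next
      case False
      have ip': "iota p = (2 * b - 2 * c + 1, 2 * b + 2 * c + 1)" using ip False by simp
      have m1: "((2 * b - 2 * c + 1) - (2 * b + 2 * c + 1)) mod 4 = 0" by presburger
      have e: "\<bar>(2 * b - 2 * c + 1) - 3 * (2 * b + 2 * c + 1)\<bar> = 2 * (2 * a + 1)" using a0 c by simp
      show ?thesis unfolding ip' iota1[OF m1] e using xy(1) a b c a0 by simp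
    qed
    with inP show ?thesis by simp
  next
    case False
    define c where "c = (a - b - 1) div 2"
    have "even (a - b - 1)" using False by simp
    then have c: "a = b + 2 * c + 1" unfolding c_def by simp
    have m0: "(x - y) mod 4 \<noteq> 0" using a b c by presburger
    have s1: "x + 3 * y = 2 * (4 * b + 2 * c + 3)" using a b c by simp
    have s2: "x - y = 2 * (2 * c + 1)" using a b c by simp
    have ip: "iota p = (4 * b + 2 * c + 3, \<bar>2 * c + 1\<bar>)"
      unfolding xy(1) iota2[OF m0] s1 s2 by (simp add: abs_mult)
    have inP: "iota p \<in> Pset M"
    proof -
      have "(4 * b + 2 * c + 3) * (4 * b + 2 * c + 3) + 3 * (\<bar>2 * c + 1\<bar> * \<bar>2 * c + 1\<bar>) = 4 * M"
      proof -
        have "4 * ((4 * b + 2 * c + 3) * (4 * b + 2 * c + 3) + 3 * ((2 * c + 1) * (2 * c + 1)))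
            = 4 * (4 * M)" using norm_rot2[of x y] unfolding s1 s2 xy(6) by (simp add: algebra_simps)
        then show ?thesis by (simp add: abs_mult_self_eq)
      qed
      moreover have "odd (\<bar>2 * c + 1\<bar>)" "odd (4 * b + 2 * c + 3)" by simp_all
      moreover have "2 * c + 1 \<noteq> 0" by presburger
      then have "\<bar>2 * c + 1\<bar> > 0" by simp
      moreover have "4 * b + 2 * c + 3 > 0" using a0 c by auto
      ultimately show ?thesis unfolding ip Pset_def by simp
    qed
    have "iota (iota p) = p"
    proof (cases "c \<ge> 0")
      case True
      have ip': "iota p = (4 * b + 2 * c + 3, 2 * c + 1)" using ip True by simp
      have m1: "((4 * b + 2 * c + 3) - (2 * c + 1)) mod 4 \<noteq> 0" by presburger
      show ?thesis unfolding ip' iota2[OF m1] using xy(1) a b c a0 by simp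
    next
      case False
      have ip': "iota p = (4 * b + 2 * c + 3, - 2 * c - 1)" using ip False by simp
      have m1: "((4 * b + 2 * c + 3) - (- 2 * c - 1)) mod 4 = 0" by presburger
      have e: "\<bar>(4 * b + 2 * c + 3) - 3 * (- 2 * c - 1)\<bar> = 2 * (2 * a + 1)" using a0 c by simp
      show ?thesis unfolding ip' iota1[OF m1] e using xy(1) a b c a0 by simp
    qed
    with inP show ?thesis by simp
  qed
qed

lemma iota_fix:
  assumes p: "p \<in> Pset M"
  shows "iota p = p \<longleftrightarrow> fst p = snd p \<or> fst p = 3 * snd p"
proof -
  obtain x y where xy: "p = (x, y)" "x > 0" "y > 0" "odd x" "odd y"
    using p by (auto simp: Pset_def)
  show ?thesis
  proof (cases "(x - y) mod 4 = 0")
    case True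
    have "x \<noteq> 3 * y" using True xy by presburger
    moreover have "iota p = p \<longleftrightarrow> x = y"
    proof
      assume "iota p = p"
      then have "(x + y) div 2 = y" using iota1[OF True] xy(1) by simp
      moreover have "even (x + y)" using xy by simp
      ultimately show "x = y" by presburger
    next
      assume "x = y"
      then show "iota p = p" using iota1[OF True] xy by simp
    qed
    ultimately show ?thesis using xy(1) by simp
  next
    case False
    have "x \<noteq> y" using False by auto
    moreover have "iota p = p \<longleftrightarrow> x = 3 * y"
    proof
      assume "iota p = p"
      then have "(x + 3 * y) div 2 = x" using iota2[OF False] xy(1) by simp
      moreover have "even (x + 3 * y)" using xy by simp
      ultimately show "x = 3 * y" by presburger
    next
      assume e: "x = 3 * y"
      have "\<bar>x - y\<bar> = 2 * y" using e xy by simp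
      then show "iota p = p" using iota2[OF False] xy e by simp
    qed
    ultimately show ?thesis using xy(1) by simp
  qed
qed

lemma card_Pset_parity:
  "(of_nat (card (Pset M)) :: bit) = of_nat (card {p \<in> Pset M. fst p = snd p \<or> fst p = 3 * snd p})"
proof -
  define F where "F = {p \<in> Pset M. fst p = snd p \<or> fst p = 3 * snd p}"
  define X where "X = Pset M - F"
  have fin: "finite (Pset M)" by (rule Pset_finite)
  have XF: "Pset M = X \<union> F" "X \<inter> F = {}" using X_def F_def by auto
  have "(\<Sum>p\<in>X. (1::bit)) = 0"
  proof (rule sum_involution_eq_0[where h = iota])
    fix p assume pX: "p \<in> X"
    then have pP: "p \<in> Pset M" and nf: "iota p \<noteq> p"
      using iota_fix[of p M] by (auto simp: X_def F_def)
    show "(1::bit) + 1 = 0" by simp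
    show "iota p \<in> X"
    proof -
      have "iota p \<in> Pset M" using iota_props[OF pP] by simp
      moreover have "iota (iota p) \<noteq> iota p" using iota_props[OF pP] nf by simp
      ultimately show ?thesis using iota_fix[of "iota p" M] by (auto simp: X_def F_def)
    qed
    show "iota (iota p) = p" using iota_props[OF pP] by simp
    show "iota p \<noteq> p" by (rule nf)
  qed
  then have "(of_nat (card X) :: bit) = 0" by simp
  moreover have "card (Pset M) = card X + card F"
    using XF fin by (metis card_Un_disjoint finite_Un)
  ultimately show ?thesis by (simp add: F_def)
qed


definition T :: "nat \<Rightarrow> nat" where "T t = t * (t + 1) div 2"

lemma T2: "2 * T t = t * (t + 1)"
  unfolding T_def by simp

lemma T8: "8 * int (T t) + 1 = (2 * int t + 1) * (2 * int t + 1)"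
proof -
  have "int (2 * T t) = int t * (int t + 1)" by (simp only: T2) (simp add: algebra_simps)
  then show ?thesis by (simp add: algebra_simps)
qed

lemma T_Suc: "T (Suc t) = T t + Suc t"
proof -
  have "2 * T (Suc t) = 2 * (T t + Suc t)" by (simp only: T2 add_mult_distrib2) (simp add: T2[symmetric] algebra_simps)
  then show ?thesis by simp
qed

lemma T_strict_mono: "strict_mono T"
  unfolding strict_mono_Suc_iff by (simp add: T_Suc)

lemma T_inj: "T t = T t' \<Longrightarrow> t = t'"
  using strict_mono_eq[OF T_strict_mono] by blast

lemma psi_nth: "psi $ m = (if \<exists>t. m = T t then 1 else 0)"
  by (simp add: psi_def T_def)

lemma T_le: "t \<le> T t"
proof (induction t)
  case (Suc t) then show ?case by (simp add: T_Suc)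
qed (simp add: T_def)

section \<open>Coefficients of psi(q) psi(q^3)\<close>

definition Sn :: "nat \<Rightarrow> nat set" where
  "Sn n = {i \<in> {0..n}. (\<exists>t. i = T t) \<and> 3 dvd (n - i) \<and> (\<exists>s. (n - i) div 3 = T s)}"

lemma lhs_coeff: "(psi * dil 3 psi) $ n = of_nat (card (Sn n))"
proof -
  have "(psi * dil 3 psi) $ n = (\<Sum>i=0..n. psi $ i * dil 3 psi $ (n - i))"
    by (simp add: fps_mult_nth)
  also have "\<dots> = (\<Sum>i\<in>{0..n}. if (\<exists>t. i = T t) \<and> 3 dvd (n - i) \<and> (\<exists>s. (n - i) div 3 = T s) then 1 else 0)"
    by (intro sum.cong refl) (auto simp: psi_nth dil_nth)
  also have "\<dots> = (\<Sum>i\<in>Sn n. 1)"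
    unfolding Sn_def by (rule sum.inter_filter[symmetric]) simp
  finally show ?thesis by simp
qed

definition Qn :: "nat \<Rightarrow> (nat \<times> nat) set" where
  "Qn n = {(t, s). T t + 3 * T s = n}"

lemma card_Sn_Qn: "card (Sn n) = card (Qn n)"
proof -
  have "bij_betw (\<lambda>(t, s). T t) (Qn n) (Sn n)"
    unfolding bij_betw_def
  proof
    show "inj_on (\<lambda>(t, s). T t) (Qn n)"
    proof (rule inj_onI)
      fix p q assume "p \<in> Qn n" "q \<in> Qn n" "(\<lambda>(t, s). T t) p = (\<lambda>(t, s). T t) q"
      then obtain t s t' s' where "p = (t, s)" "q = (t', s')" "T t = T t'" "T t + 3 * T s = n" "T t' + 3 * T s' = n"
        by (auto simp: Qn_def)
      then show "p = q" using T_inj by auto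
    qed
    show "(\<lambda>(t, s). T t) ` Qn n = Sn n"
    proof
      show "(\<lambda>(t, s). T t) ` Qn n \<subseteq> Sn n"
        by (auto simp: Qn_def Sn_def)
      show "Sn n \<subseteq> (\<lambda>(t, s). T t) ` Qn n"
      proof
        fix i assume "i \<in> Sn n"
        then obtain t s where i: "i \<le> n" "i = T t" "3 dvd (n - i)" "(n - i) div 3 = T s"
          by (auto simp: Sn_def)
        have "n - i = 3 * T s" using i by (metis dvd_mult_div_cancel)
        then have "(t, s) \<in> Qn n" using i by (auto simp: Qn_def)
        then show "i \<in> (\<lambda>(t, s). T t) ` Qn n" using i by force
      qed
    qed
  qed
  then show ?thesis by (metis bij_betw_same_card)
qed

lemma card_Qn_Pset: "card (Qn n) = card (Pset (2 * int n + 1))"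
proof -
  have "bij_betw (\<lambda>(t, s). (2 * int t + 1, 2 * int s + 1)) (Qn n) (Pset (2 * int n + 1))"
    unfolding bij_betw_def
  proof
    show "inj_on (\<lambda>(t, s). (2 * int t + 1, 2 * int s + 1)) (Qn n)"
      by (auto simp: inj_on_def)
    show "(\<lambda>(t, s). (2 * int t + 1, 2 * int s + 1)) ` Qn n = Pset (2 * int n + 1)"
    proof
      show "(\<lambda>(t, s). (2 * int t + 1, 2 * int s + 1)) ` Qn n \<subseteq> Pset (2 * int n + 1)"
      proof (rule image_subsetI)
        fix p assume p: "p \<in> Qn n"
        then obtain t s where ts: "p = (t, s)" by (cases p)
        then have q0: "(t, s) \<in> Qn n" using p by simp
        then have q: "int (T t) + 3 * int (T s) = int n" by (auto simp: Qn_def)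
        have "(2 * int t + 1) * (2 * int t + 1) + 3 * ((2 * int s + 1) * (2 * int s + 1)) = 4 * (2 * int n + 1)"
          using q T8[of t] T8[of s] by (simp add: algebra_simps)
        then show "(\<lambda>(t, s). (2 * int t + 1, 2 * int s + 1)) p \<in> Pset (2 * int n + 1)"
          by (simp add: Pset_def ts)
      qed
      show "Pset (2 * int n + 1) \<subseteq> (\<lambda>(t, s). (2 * int t + 1, 2 * int s + 1)) ` Qn n"
      proof
        fix p assume "p \<in> Pset (2 * int n + 1)"
        then obtain x y where xy: "p = (x, y)" "x > 0" "y > 0" "odd x" "odd y"
          "x * x + 3 * (y * y) = 4 * (2 * int n + 1)" by (auto simp: Pset_def)
        obtain a where a: "x = 2 * a + 1" using xy(4) by (auto elim: oddE)
        obtain b where b: "y = 2 * b + 1" using xy(5) by (auto elim: oddE)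
        define t where "t = nat a"
        define s where "s = nat b"
        have ta: "int t = a" "int s = b" using xy a b by (auto simp: t_def s_def)
        have "8 * int (T t) + 1 + 3 * (8 * int (T s) + 1) = 4 * (2 * int n + 1)"
          unfolding T8 ta using xy(6) a b by simp
        then have "int (T t + 3 * T s) = int n" by simp
        then have "T t + 3 * T s = n" by (simp only: of_nat_eq_iff)
        then have "(t, s) \<in> Qn n" by (simp add: Qn_def)
        moreover have "p = (2 * int t + 1, 2 * int s + 1)" using xy a b ta by simp
        ultimately show "p \<in> (\<lambda>(t, s). (2 * int t + 1, 2 * int s + 1)) ` Qn n" by force
      qed
    qed
  qed
  then show ?thesis by (metis bij_betw_same_card)
qed

lemma card_subsingleton_if:
  assumes "\<And>a b. a \<in> A \<Longrightarrow> b \<in> A \<Longrightarrow> a = b"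
  shows "card A = (if A = {} then 0 else 1)"
proof (cases "A = {}")
  case False
  then obtain a where "a \<in> A" by auto
  then have "A = {a}" using assms by auto
  then show ?thesis by simp
qed simp

lemma fix_card:
  assumes M: "odd M"
  shows "card {p \<in> Pset M. fst p = snd p \<or> fst p = 3 * snd p} =
     (if \<exists>x>0. x * x = M then 1 else 0) + (if \<exists>y>0. 3 * (y * y) = M then 1 else 0)"
proof -
  define F1 where "F1 = {p \<in> Pset M. fst p = snd p}"
  define F2 where "F2 = {p \<in> Pset M. fst p = 3 * snd p}"
  have fin: "finite F1" "finite F2" using Pset_finite by (auto simp: F1_def F2_def)
  have un: "{p \<in> Pset M. fst p = snd p \<or> fst p = 3 * snd p} = F1 \<union> F2" by (auto simp: F1_def F2_def)
  have dis: "F1 \<inter> F2 = {}" by (auto simp: F1_def F2_def Pset_def)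
  have F1e: "F1 = (\<lambda>x. (x, x)) ` {x. x > 0 \<and> x * x = M}"
  proof
    show "F1 \<subseteq> (\<lambda>x. (x, x)) ` {x. x > 0 \<and> x * x = M}"
      by (auto simp: F1_def Pset_def)
    show "(\<lambda>x. (x, x)) ` {x. x > 0 \<and> x * x = M} \<subseteq> F1"
    proof (rule image_subsetI)
      fix x :: int assume "x \<in> {x. x > 0 \<and> x * x = M}"
      then have x: "x > 0" "x * x = M" by auto
      then have "odd x" using M by auto
      then show "(x, x) \<in> F1" using x by (simp add: F1_def Pset_def)
    qed
  qed
  have F2e: "F2 = (\<lambda>y. (3 * y, y)) ` {y. y > 0 \<and> 3 * (y * y) = M}"
  proof
    show "F2 \<subseteq> (\<lambda>y. (3 * y, y)) ` {y. y > 0 \<and> 3 * (y * y) = M}"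
      by (auto simp: F2_def Pset_def)
    show "(\<lambda>y. (3 * y, y)) ` {y. y > 0 \<and> 3 * (y * y) = M} \<subseteq> F2"
    proof (rule image_subsetI)
      fix y :: int assume "y \<in> {y. y > 0 \<and> 3 * (y * y) = M}"
      then have y: "y > 0" "3 * (y * y) = M" by auto
      then have "odd y" using M by auto
      then show "(3 * y, y) \<in> F2" using y by (simp add: F2_def Pset_def)
    qed
  qed
  have sq_uniq: "a = b" if "a > 0" "b > 0" "a * a = b * b" for a b :: int
  proof -
    have "(a - b) * (a + b) = 0" using that(3) by (simp add: algebra_simps)
    moreover have "a + b \<noteq> 0" using that by simp
    ultimately show ?thesis by simp
  qed
  have c1: "card F1 = (if \<exists>x>0. x * x = M then 1 else 0)"
  proof -
    have "card F1 = card {x. x > 0 \<and> x * x = M}" unfolding F1e by (rule card_image) (auto simp: inj_on_def)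
    also have "\<dots> = (if {x. x > 0 \<and> x * x = M} = {} then 0 else 1)"
      by (rule card_subsingleton_if) (use sq_uniq in auto)
    finally show ?thesis by auto
  qed
  have c2: "card F2 = (if \<exists>y>0. 3 * (y * y) = M then 1 else 0)"
  proof -
    have "card F2 = card {y. y > 0 \<and> 3 * (y * y) = M}" unfolding F2e by (rule card_image) (auto simp: inj_on_def)
    also have "\<dots> = (if {y. y > 0 \<and> 3 * (y * y) = M} = {} then 0 else 1)"
    proof (rule card_subsingleton_if)
      fix a b assume "a \<in> {y. y > 0 \<and> 3 * (y * y) = M}" "b \<in> {y. y > 0 \<and> 3 * (y * y) = M}"
      then have "a > 0" "b > 0" "a * a = b * b" by auto
      then show "a = b" by (rule sq_uniq)
    qed
    finally show ?thesis by auto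
  qed
  show ?thesis unfolding un using card_Un_disjoint[OF fin dis] c1 c2 by simp
qed

lemma sq_case: "(\<exists>x>0. x * x = 2 * int n + 1) \<longleftrightarrow> (4 dvd n \<and> (\<exists>t. n div 4 = T t))"
proof
  assume "\<exists>x>0. x * x = 2 * int n + 1"
  then obtain x where x: "x > 0" "x * x = 2 * int n + 1" by blast
  then have "odd (x * x)" by simp
  then have "odd x" by simp
  then obtain a where a: "x = 2 * a + 1" by (auto elim: oddE)
  have "a \<ge> 0" using x a by simp
  define t where "t = nat a"
  have "int n = 4 * int (T t)" using T8[of t] x a \<open>a \<ge> 0\<close> by (simp add: t_def algebra_simps)
  then have "n = 4 * T t" by linarith
  then show "4 dvd n \<and> (\<exists>t. n div 4 = T t)" by auto
next
  assume "4 dvd n \<and> (\<exists>t. n div 4 = T t)"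
  then obtain t where t0: "4 dvd n" "n div 4 = T t" by blast
  then have t: "n = 4 * T t" by (metis dvd_mult_div_cancel)
  have "(2 * int t + 1) * (2 * int t + 1) = 2 * int n + 1" using T8[of t] t by simp
  then show "\<exists>x>0. x * x = 2 * int n + 1" by (intro exI[of _ "2 * int t + 1"]) simp
qed

lemma sq3_case: "(\<exists>y>0. 3 * (y * y) = 2 * int n + 1) \<longleftrightarrow> (n \<ge> 1 \<and> 12 dvd (n - 1) \<and> (\<exists>t. (n - 1) div 12 = T t))"
proof
  assume "\<exists>y>0. 3 * (y * y) = 2 * int n + 1"
  then obtain y where y: "y > 0" "3 * (y * y) = 2 * int n + 1" by blast
  then have "odd (3 * (y * y))" by simp
  then have "odd y" by simp
  then obtain a where a: "y = 2 * a + 1" by (auto elim: oddE)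
  have "a \<ge> 0" using y a by simp
  define t where "t = nat a"
  have "int n = 12 * int (T t) + 1" using T8[of t] y a \<open>a \<ge> 0\<close> by (simp add: t_def algebra_simps)
  then have "n = 12 * T t + 1" by linarith
  then show "n \<ge> 1 \<and> 12 dvd (n - 1) \<and> (\<exists>t. (n - 1) div 12 = T t)" by auto
next
  assume "n \<ge> 1 \<and> 12 dvd (n - 1) \<and> (\<exists>t. (n - 1) div 12 = T t)"
  then obtain t where t0: "n \<ge> 1" "12 dvd (n - 1)" "(n - 1) div 12 = T t" by blast
  then have "n - 1 = 12 * T t" by (metis dvd_mult_div_cancel)
  then have t: "n = 12 * T t + 1" using t0 by simp
  have "3 * ((2 * int t + 1) * (2 * int t + 1)) = 2 * int n + 1" using T8[of t] t by simp
  then show "\<exists>y>0. 3 * (y * y) = 2 * int n + 1" by (intro exI[of _ "2 * int t + 1"]) simp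
qed

theorem psi_quad: "psi * dil 3 psi = dil 4 psi + fps_X * dil 12 psi"
proof (rule fps_ext)
  fix n
  define A where "A = (4 dvd n \<and> (\<exists>t. n div 4 = T t))"
  define B where "B = (n \<ge> 1 \<and> 12 dvd (n - 1) \<and> (\<exists>t. (n - 1) div 12 = T t))"
  have "(psi * dil 3 psi) $ n = of_nat (card (Pset (2 * int n + 1)))"
    by (simp add: lhs_coeff card_Sn_Qn card_Qn_Pset)
  also have "\<dots> = of_nat (card {p \<in> Pset (2 * int n + 1). fst p = snd p \<or> fst p = 3 * snd p})"
    by (rule card_Pset_parity)
  also have "\<dots> = (if A then 1 else 0) + (if B then 1 else 0)"
    unfolding fix_card[of "2 * int n + 1", simplified] sq_case sq3_case A_def B_def by simp
  also have "\<dots> = (dil 4 psi + fps_X * dil 12 psi) $ n"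
  proof -
    have "dil 4 psi $ n = (if A then 1 else 0)" by (auto simp: A_def dil_nth psi_nth)
    moreover have "(fps_X * dil 12 psi) $ n = (if B then 1 else 0)"
      by (cases n) (auto simp: B_def dil_nth psi_nth fps_X_mult_nth)
    ultimately show ?thesis by simp
  qed
  finally show "(psi * dil 3 psi) $ n = (dil 4 psi + fps_X * dil 12 psi) $ n" .
qed

abbreviation fr :: "nat \<Rightarrow> bit fps" where "fr r \<equiv> dil r eul"

lemma fr_0: "r > 0 \<Longrightarrow> fr r $ 0 = 1"
  by (simp add: dil_nth eul_0)

lemma identI: "(eul * fr 3) ^ 3 = dil 4 (eul ^ 3) + fps_X * dil 12 (eul ^ 3)"
proof -
  have "(eul * fr 3) ^ 3 = eul ^ 3 * dil 3 (eul ^ 3)" by (simp add: power_mult_distrib dil_power)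
  also have "\<dots> = psi * dil 3 psi" by (simp add: jacobi2)
  also have "\<dots> = dil 4 (eul ^ 3) + fps_X * dil 12 (eul ^ 3)" by (simp add: psi_quad jacobi2)
  finally show ?thesis .
qed

lemma dil_X: "r > 0 \<Longrightarrow> dil r (fps_X :: 'a::comm_ring_1 fps) = fps_X ^ r"
  using dil_X_power[of r 1] by simp

lemma ringlem: "x * a * (b + x^2 * c) * d = x * (a*b*d) + x^3 * (a*c*d)" for x a b c d :: "'a::comm_ring_1"
  by (simp add: algebra_simps power_numeral_reduce)
lemma ringlem2: "x^3 * (u + x^4 * v) = x^3 * u + x^7 * v" for x u v :: "'a::comm_ring_1"
  by (simp add: algebra_simps flip: power_add)

lemma teq_one_minus_X_high: "m > N \<Longrightarrow> teq N (1 - fps_X ^ m :: 'a::comm_ring_1 fps) 1"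
  by (auto simp: teq_def)

lemma fr_teq:
  assumes r: "r > 0"
  shows "teq N (fr r) (\<Prod>m\<in>{m\<in>{1..N}. r dvd m}. 1 - fps_X ^ m)"
proof -
  have 1: "teq N (fr r) (dil r (\<Prod>j\<in>{1..N}. 1 - fps_X ^ j))"
    by (intro dil_teq r eul_teq) simp
  have 2: "dil r (\<Prod>j\<in>{1..N}. 1 - fps_X ^ j :: bit fps) = (\<Prod>j\<in>{1..N}. 1 - fps_X ^ (r * j))"
    using r by (simp add: dil_prod dil_one_minus)
  have 3: "(\<Prod>j\<in>{1..N}. 1 - fps_X ^ (r * j) :: bit fps) = (\<Prod>m\<in>(\<lambda>j. r * j) ` {1..N}. 1 - fps_X ^ m)"
    using r by (subst prod.reindex) (auto simp: inj_on_def)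
  have 4: "teq N (\<Prod>m\<in>(\<lambda>j. r * j) ` {1..N}. 1 - fps_X ^ m :: bit fps) (\<Prod>m\<in>{m\<in>{1..N}. r dvd m}. 1 - fps_X ^ m)"
  proof (rule teq_prod_subset)
    show "{m \<in> {1..N}. r dvd m} \<subseteq> (\<lambda>j. r * j) ` {1..N}"
    proof
      fix m assume m: "m \<in> {m \<in> {1..N}. r dvd m}"
      then obtain j where j: "m = r * j" by auto
      have "j \<ge> 1" using m j by (cases j) auto
      moreover have "j \<le> r * j" using r by simp
      moreover have "m \<le> N" using m by simp
      ultimately have "j \<le> N" using j by linarith
      moreover have "j \<ge> 1" using m j by (cases j) auto
      ultimately show "m \<in> (\<lambda>j. r * j) ` {1..N}" using j by auto
    qed
    fix m assume "m \<in> (\<lambda>j. r * j) ` {1..N} - {m \<in> {1..N}. r dvd m}"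
    then have "m > N" using r by auto
    then show "teq N (1 - fps_X ^ m :: bit fps) 1" by (rule teq_one_minus_X_high)
  qed simp
  have "teq N (fr r) (\<Prod>m\<in>(\<lambda>j. r * j) ` {1..N}. 1 - fps_X ^ m)" using 1 unfolding 2 3 .
  then show ?thesis using 4 by (rule teq_trans)
qed

definition allowed :: "nat \<Rightarrow> bool" where
  "allowed m \<longleftrightarrow> \<not> 3 dvd m \<and> \<not> 4 dvd m"

definition Sa :: "nat \<Rightarrow> nat set" where
  "Sa N = {m \<in> {1..N}. allowed m}"

lemma prod_split_12:
  fixes g :: "nat \<Rightarrow> 'a::comm_monoid_mult"
  shows "prod g {1..N} * prod g {m\<in>{1..N}. 12 dvd m} =
         prod g {m\<in>{1..N}. 3 dvd m} * prod g {m\<in>{1..N}. 4 dvd m} * prod g (Sa N)"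
proof -
  let ?S3 = "{m\<in>{1..N}. 3 dvd m}" and ?S4 = "{m\<in>{1..N}. 4 dvd m}"
  have i: "?S3 \<inter> ?S4 = {m\<in>{1..N}. 12 dvd m}"
  proof -
    have "(3 dvd m \<and> 4 dvd m) \<longleftrightarrow> 12 dvd m" for m :: nat by presburger
    then show ?thesis by auto
  qed
  have u: "{1..N} = Sa N \<union> (?S3 \<union> ?S4)" "Sa N \<inter> (?S3 \<union> ?S4) = {}"
    by (auto simp: Sa_def allowed_def)
  have "prod g {1..N} = prod g (Sa N) * prod g (?S3 \<union> ?S4)"
    by (subst u(1), rule prod.union_disjoint) (use u(2) in \<open>auto simp: Sa_def\<close>)
  moreover have "prod g (?S3 \<union> ?S4) * prod g (?S3 \<inter> ?S4) = prod g ?S3 * prod g ?S4"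
    by (rule prod.union_inter) auto
  ultimately show ?thesis unfolding i by (simp add: mult_ac)
qed

definition AA :: "nat \<Rightarrow> bit fps" where
  "AA N = (\<Prod>m\<in>Sa N. 1 - fps_X ^ m)"

lemma AA_teq: "teq N (eul * fr 12) (fr 3 * fr 4 * AA N)"
proof -
  have 1: "teq N (eul * fr 12) ((\<Prod>m\<in>{1..N}. 1 - fps_X ^ m) * (\<Prod>m\<in>{m\<in>{1..N}. 12 dvd m}. 1 - fps_X ^ m))"
    by (rule teq_mult[OF eul_teq fr_teq]) auto
  have 2: "teq N (fr 3 * fr 4) ((\<Prod>m\<in>{m\<in>{1..N}. 3 dvd m}. 1 - fps_X ^ m) * (\<Prod>m\<in>{m\<in>{1..N}. 4 dvd m}. 1 - fps_X ^ m))"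
    by (rule teq_mult[OF fr_teq fr_teq]) auto
  have 3: "teq N (fr 3 * fr 4 * AA N) ((\<Prod>m\<in>{m\<in>{1..N}. 3 dvd m}. 1 - fps_X ^ m) * (\<Prod>m\<in>{m\<in>{1..N}. 4 dvd m}. 1 - fps_X ^ m) * AA N)"
    by (rule teq_mult[OF 2 teq_refl])
  have 4: "(\<Prod>m\<in>{1..N}. 1 - fps_X ^ m) * (\<Prod>m\<in>{m\<in>{1..N}. 12 dvd m}. 1 - fps_X ^ m) =
     (\<Prod>m\<in>{m\<in>{1..N}. 3 dvd m}. 1 - fps_X ^ m) * (\<Prod>m\<in>{m\<in>{1..N}. 4 dvd m}. 1 - (fps_X::bit fps) ^ m) * AA N"
    unfolding AA_def by (rule prod_split_12)
  show ?thesis using teq_trans[OF 1[unfolded 4] teq_sym[OF 3]] .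
qed

lemma h_identity:
  assumes hA: "\<And>N. teq N (h * AA N) 1"
  shows "h * (fr 6 * fr 12) = (eul * fr 3) ^ 3"
proof -
  have base: "h * eul * fr 12 = fr 3 * fr 4"
  proof (rule teq_eq)
    fix N
    have "teq N (h * (eul * fr 12)) (h * (fr 3 * fr 4 * AA N))" by (intro teq_mult_left AA_teq)
    moreover have "h * (fr 3 * fr 4 * AA N) = fr 3 * fr 4 * (h * AA N)" by (simp add: mult_ac)
    moreover have "teq N (fr 3 * fr 4 * (h * AA N)) (fr 3 * fr 4 * 1)" by (intro teq_mult_left hA)
    ultimately have "teq N (h * (eul * fr 12)) (fr 3 * fr 4 * 1)" using teq_trans by metis
    then show "teq N (h * eul * fr 12) (fr 3 * fr 4)" by (simp add: mult.assoc)
  qed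
  have f4: "fr 4 = eul ^ 4" by (simp add: frob4)
  have f6: "fr 6 = fr 3 ^ 2" by (simp add: frob_dil)
  have inv: "inverse eul * eul = 1" by (rule inverse_mult_eq_1) (simp add: eul_0)
  have "h * (fr 6 * fr 12) = (h * eul * fr 12) * fr 6 * inverse eul"
    using inv by (simp add: mult_ac)
  also have "\<dots> = fr 3 * eul ^ 4 * fr 3 ^ 2 * inverse eul" unfolding base f4 f6 by simp
  also have "\<dots> = (eul * fr 3) ^ 3 * (inverse eul * eul)"
    by (simp add: power_numeral_reduce mult_ac)
  finally show ?thesis using inv by simp
qed

lemma psupp_fr_even: "r > 0 \<Longrightarrow> even r \<Longrightarrow> psupp True (fr r)"
  by (auto simp: psupp_def dil_nth elim!: evenE dest: dvd_mult_left)

lemma parts_identity: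
  assumes hW: "h * (fr 6 * fr 12) = (eul * fr 3) ^ 3"
  shows "ev h * (fr 6 * fr 12) = fr 4 ^ 3" "od h * (fr 6 * fr 12) = fps_X * fr 12 ^ 3"
proof -
  have W: "psupp True (fr 6 * fr 12)" using psupp_mult[OF psupp_fr_even psupp_fr_even, of 6 12] by simp
  have p4: "psupp True (fr 4 ^ 3)" by (intro psupp_power psupp_fr_even) auto
  have p12: "psupp False (fps_X * fr 12 ^ 3)"
    using psupp_X_mult[OF psupp_power[OF psupp_fr_even[of 12]]] by simp
  have rhs: "h * (fr 6 * fr 12) = fr 4 ^ 3 + fps_X * fr 12 ^ 3"
    unfolding hW identI by (simp add: dil_power)
  show "ev h * (fr 6 * fr 12) = fr 4 ^ 3"
    using ev_mult_even(1)[OF W, of h] rhs by (simp add: ev_add ev_psupp[OF p4] ev_psuppF[OF p12])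
  show "od h * (fr 6 * fr 12) = fps_X * fr 12 ^ 3"
    using ev_mult_even(2)[OF W, of h] rhs by (simp add: od_add od_psuppT[OF p4] od_psupp[OF p12])
qed

lemma bfps_mult_cancel: "c $ 0 \<noteq> 0 \<Longrightarrow> a * c = b * c \<Longrightarrow> (a :: bit fps) = b"
proof -
  assume c: "c $ 0 \<noteq> 0" and e: "a * c = b * c"
  have "c \<noteq> 0" using c by auto
  then show ?thesis using e by simp
qed

lemma C_formula:
  assumes hW: "h * (fr 6 * fr 12) = (eul * fr 3) ^ 3"
  shows "ev h * od h * h ^ 2 =
     fps_X * dil 4 (eul ^ 3 * fr 2 ^ 3 * inverse (fr 3 ^ 3))
     + fps_X ^ 3 * dil 16 (eul ^ 3) + fps_X ^ 7 * dil 48 (eul ^ 3)"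
proof -
  define W where "W = fr 6 * fr 12"
  define C where "C = ev h * od h * h ^ 2"
  have e: "ev h * W = fr 4 ^ 3" and o: "od h * W = fps_X * fr 12 ^ 3"
    using parts_identity[OF hW] by (simp_all add: W_def)
  have hw: "h * W = fr 4 ^ 3 + fps_X * fr 12 ^ 3" using hW identI by (simp add: W_def dil_power)
  have W4: "W ^ 4 = fr 12 ^ 6"
  proof -
    have "W ^ 4 = fr 6 ^ 4 * fr 12 ^ 4" by (simp add: W_def power_mult_distrib)
    also have "fr 6 ^ 4 = fr 12 ^ 2" by (simp add: frob4_dil frob_dil)
    finally show ?thesis by (simp flip: power_add)
  qed
  have "C * W ^ 4 = (ev h * W) * (od h * W) * (h * W) ^ 2"
    by (simp add: C_def power_mult_distrib power_numeral_reduce mult_ac)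
  also have "\<dots> = fr 4 ^ 3 * (fps_X * fr 12 ^ 3) * (fr 4 ^ 3 + fps_X * fr 12 ^ 3) ^ 2"
    unfolding e o hw ..
  also have "(fr 4 ^ 3 + fps_X * fr 12 ^ 3) ^ 2 = fr 8 ^ 3 + fps_X ^ 2 * fr 24 ^ 3"
    by (simp add: frob dil_add dil_mult dil_power dil_X_power dil_dil)
  finally have 1: "C * fr 12 ^ 3 * fr 12 ^ 3 = (fps_X * fr 4 ^ 3 * (fr 8 ^ 3 + fps_X ^ 2 * fr 24 ^ 3)) * fr 12 ^ 3"
    unfolding W4 by (simp add: mult_ac flip: power_add)
  have c0: "(fr 12 ^ 3) $ 0 \<noteq> 0" by (simp add: fps_nth_power_0 fr_0)
  have 2: "C * fr 12 ^ 3 = fps_X * fr 4 ^ 3 * (fr 8 ^ 3 + fps_X ^ 2 * fr 24 ^ 3)"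
    by (rule bfps_mult_cancel[OF c0 1])
  have inv: "fr 12 ^ 3 * inverse (fr 12 ^ 3) = 1" by (rule inverse_mult_eq_1'[OF c0])
  have 3: "C = fps_X * fr 4 ^ 3 * (fr 8 ^ 3 + fps_X ^ 2 * fr 24 ^ 3) * inverse (fr 12 ^ 3)"
    using arg_cong[OF 2, of "\<lambda>z. z * inverse (fr 12 ^ 3)"] inv by (simp add: mult.assoc)
  have c3: "(fr 3 ^ 3) $ 0 \<noteq> 0" by (simp add: fps_nth_power_0 fr_0)
  have B: "eul ^ 3 * fr 6 ^ 3 * inverse (fr 3 ^ 3) = dil 4 (eul ^ 3) + fps_X * dil 12 (eul ^ 3)"
  proof -
    have "fr 6 = fr 3 ^ 2" using frob_dil[of 3 eul] by simp
    then have "fr 6 ^ 3 = fr 3 ^ 3 * fr 3 ^ 3" by (simp flip: power_mult power_add)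
    then have "eul ^ 3 * fr 6 ^ 3 * inverse (fr 3 ^ 3) = eul ^ 3 * fr 3 ^ 3 * (fr 3 ^ 3 * inverse (fr 3 ^ 3))"
      by (simp add: mult_ac)
    also have "\<dots> = (eul * fr 3) ^ 3" using inverse_mult_eq_1'[OF c3] by (simp add: power_mult_distrib)
    finally show ?thesis using identI by simp
  qed
  have d4: "dil 4 (inverse (fr 3 ^ 3)) = inverse (fr 12 ^ 3)"
    using c3 by (simp add: dil_inverse dil_power dil_dil)
  have dA: "dil 4 (eul ^ 3 * fr 2 ^ 3 * inverse (fr 3 ^ 3)) = fr 4 ^ 3 * fr 8 ^ 3 * inverse (fr 12 ^ 3)"
    by (simp add: dil_mult dil_power dil_dil d4)
  have dB: "dil 4 (eul ^ 3 * fr 6 ^ 3 * inverse (fr 3 ^ 3)) = fr 4 ^ 3 * fr 24 ^ 3 * inverse (fr 12 ^ 3)"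
    by (simp add: dil_mult dil_power dil_dil d4)
  have dB2: "dil 4 (eul ^ 3 * fr 6 ^ 3 * inverse (fr 3 ^ 3)) = dil 16 (eul ^ 3) + fps_X ^ 4 * dil 48 (eul ^ 3)"
    unfolding B by (simp add: dil_add dil_mult dil_X_power dil_dil dil_X)
  have "C = fps_X * (fr 4 ^ 3 * fr 8 ^ 3 * inverse (fr 12 ^ 3)) + fps_X ^ 3 * (fr 4 ^ 3 * fr 24 ^ 3 * inverse (fr 12 ^ 3))"
    unfolding 3 by (rule ringlem)
  also have "\<dots> = fps_X * dil 4 (eul ^ 3 * fr 2 ^ 3 * inverse (fr 3 ^ 3)) + fps_X ^ 3 * (dil 16 (eul ^ 3) + fps_X ^ 4 * dil 48 (eul ^ 3))"
    unfolding dA dB2[symmetric] dB ..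
  also have "\<dots> = fps_X * dil 4 (eul ^ 3 * fr 2 ^ 3 * inverse (fr 3 ^ 3)) + fps_X ^ 3 * dil 16 (eul ^ 3) + fps_X ^ 7 * dil 48 (eul ^ 3)"
    by (simp only: ringlem2 add.assoc)
  finally show ?thesis by (simp add: C_def)
qed

lemma Xdil_nth: "r > 0 \<Longrightarrow> (fps_X ^ k * dil r a) $ m = (if k \<le> m \<and> r dvd (m - k) then a $ ((m - k) div r) else (0 :: 'a::comm_ring_1))"
  by (simp add: fps_X_power_mult_nth dil_nth)

lemma C_coeffs:
  assumes hW: "h * (fr 6 * fr 12) = (eul * fr 3) ^ 3"
  shows "(ev h * od h * h ^ 2) $ (16 * n + 3) = psi $ n"
        "(ev h * od h * h ^ 2) $ (48 * n + 7) = psi $ n"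
proof -
  define A where "A = eul ^ 3 * fr 2 ^ 3 * inverse (fr 3 ^ 3)"
  have C: "ev h * od h * h ^ 2 = fps_X ^ 1 * dil 4 A + fps_X ^ 3 * dil 16 (eul ^ 3) + fps_X ^ 7 * dil 48 (eul ^ 3)"
    using C_formula[OF hW, folded A_def] by simp
  have n1: "\<not> (1 \<le> 16 * n + 3 \<and> 4 dvd (16 * n + 3 - 1))" by presburger
  have n2: "3 \<le> 16 * n + 3 \<and> 16 dvd (16 * n + 3 - 3)" by simp
  have n2': "(16 * n + 3 - 3) div 16 = n" by simp
  have n3: "\<not> (7 \<le> 16 * n + 3 \<and> 48 dvd (16 * n + 3 - 7))" by presburger
  show "(ev h * od h * h ^ 2) $ (16 * n + 3) = psi $ n"
    unfolding C fps_add_nth Xdil_nth[OF zero_less_numeral] if_not_P[OF n1] if_P[OF n2] if_not_P[OF n3] n2'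
    by (simp add: jacobi2)
  have m1: "\<not> (1 \<le> 48 * n + 7 \<and> 4 dvd (48 * n + 7 - 1))" by presburger
  have m2: "\<not> (3 \<le> 48 * n + 7 \<and> 16 dvd (48 * n + 7 - 3))" by presburger
  have m3: "7 \<le> 48 * n + 7 \<and> 48 dvd (48 * n + 7 - 7)" by simp
  have m3': "(48 * n + 7 - 7) div 48 = n" by simp
  show "(ev h * od h * h ^ 2) $ (48 * n + 7) = psi $ n"
    unfolding C fps_add_nth Xdil_nth[OF zero_less_numeral] if_not_P[OF m1] if_not_P[OF m2] if_P[OF m3] m3'
    by (simp add: jacobi2)
qed

definition G :: "nat \<Rightarrow> int fps" where
  "G m = Abs_fps (\<lambda>n. if m dvd n then 1 else 0)"

lemma G_mult_nth:
  assumes m: "m > 0"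
  shows "(G m * F) $ n = (\<Sum>k\<in>{0..n div m}. F $ (n - k * m))"
proof -
  have "(G m * F) $ n = (\<Sum>i=0..n. G m $ i * F $ (n - i))" by (simp add: fps_mult_nth)
  also have "\<dots> = (\<Sum>i\<in>{0..n}. if m dvd i then F $ (n - i) else 0)"
    by (intro sum.cong refl) (simp add: G_def)
  also have "\<dots> = (\<Sum>i\<in>{i\<in>{0..n}. m dvd i}. F $ (n - i))"
    by (rule sum.inter_filter[symmetric]) simp
  also have "{i\<in>{0..n}. m dvd i} = (\<lambda>k. k * m) ` {0..n div m}"
  proof
    show "{i\<in>{0..n}. m dvd i} \<subseteq> (\<lambda>k. k * m) ` {0..n div m}"
    proof
      fix i assume i: "i \<in> {i\<in>{0..n}. m dvd i}"
      then obtain k where k: "i = m * k" by (auto elim!: dvdE)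
      then have k': "i = k * m" by simp
      have "k * m \<le> n" using i k' by simp
      then have "k \<le> n div m" using m by (simp add: less_eq_div_iff_mult_less_eq)
      then show "i \<in> (\<lambda>k. k * m) ` {0..n div m}" using k' by auto
    qed
    show "(\<lambda>k. k * m) ` {0..n div m} \<subseteq> {i\<in>{0..n}. m dvd i}"
    proof
      fix i assume "i \<in> (\<lambda>k. k * m) ` {0..n div m}"
      then obtain k where k0: "i = k * m" "k \<in> {0..n div m}" by (rule imageE)
      then have k: "i = k * m" "k \<le> n div m" by auto
      then have "k * m \<le> n" using m by (simp add: less_eq_div_iff_mult_less_eq)
      then show "i \<in> {i\<in>{0..n}. m dvd i}" using k by auto
    qed
  qed
  also have "(\<Sum>i\<in>(\<lambda>k. k * m) ` {0..n div m}. F $ (n - i)) = (\<Sum>k\<in>{0..n div m}. F $ (n - k * m))"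
    using m by (subst sum.reindex) (auto simp: inj_on_def)
  finally show ?thesis .
qed

definition MS :: "'b set \<Rightarrow> ('b \<Rightarrow> nat) \<Rightarrow> nat \<Rightarrow> 'b multiset set" where
  "MS I w n = {M. set_mset M \<subseteq> I \<and> sum_mset (image_mset w M) = n}"

lemma MS_empty: "MS {} w n = (if n = 0 then {{#}} else {})"
  by (auto simp: MS_def)

lemma MS_insert:
  assumes j: "j \<notin> I" and wj: "w j > 0"
  shows "MS (insert j I) w n = (\<Union>k\<in>{0..n div w j}. (\<lambda>M'. M' + replicate_mset k j) ` MS I w (n - k * w j))"
proof
  show "MS (insert j I) w n \<subseteq> (\<Union>k\<in>{0..n div w j}. (\<lambda>M'. M' + replicate_mset k j) ` MS I w (n - k * w j))"
  proof
    fix M assume M: "M \<in> MS (insert j I) w n"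
    define k where "k = count M j"
    define M' where "M' = filter_mset (\<lambda>x. x \<noteq> j) M"
    have MM0: "M = filter_mset (\<lambda>x. x \<noteq> j) M + filter_mset (\<lambda>x. \<not> x \<noteq> j) M"
      by (rule multiset_partition)
    have "filter_mset (\<lambda>x. \<not> x \<noteq> j) M = replicate_mset (count M j) j"
      using filter_eq_replicate_mset[of j M] by simp
    then have MM: "M = M' + replicate_mset k j"
      using MM0 unfolding M'_def k_def by simp
    have sM': "set_mset M' \<subseteq> I" using M by (auto simp: MS_def M'_def)
    have "sum_mset (image_mset w M) = sum_mset (image_mset w M') + k * w j"
      unfolding MM by simp
    then have s: "sum_mset (image_mset w M') + k * w j = n" using M by (simp add: MS_def)
    then have "k * w j \<le> n" by linarith
    then have "k \<le> n div w j" using wj by (simp add: less_eq_div_iff_mult_less_eq)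
    moreover have "M' \<in> MS I w (n - k * w j)" using sM' s by (auto simp: MS_def)
    ultimately show "M \<in> (\<Union>k\<in>{0..n div w j}. (\<lambda>M'. M' + replicate_mset k j) ` MS I w (n - k * w j))"
      using MM by auto
  qed
  show "(\<Union>k\<in>{0..n div w j}. (\<lambda>M'. M' + replicate_mset k j) ` MS I w (n - k * w j)) \<subseteq> MS (insert j I) w n"
  proof clarify
    fix k M' assume k: "k \<in> {0..n div w j}" and M': "M' \<in> MS I w (n - k * w j)"
    have "k * w j \<le> n" using k wj by (simp add: less_eq_div_iff_mult_less_eq)
    then show "M' + replicate_mset k j \<in> MS (insert j I) w n"
      using M' by (auto simp: MS_def)
  qed
qed

lemma MS_count:
  assumes "finite I" "\<And>i. i \<in> I \<Longrightarrow> w i > 0"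
  shows "finite (MS I w n) \<and> int (card (MS I w n)) = (\<Prod>i\<in>I. G (w i)) $ n"
  using assms
proof (induction I arbitrary: n rule: finite_induct)
  case empty
  then show ?case by (simp add: MS_empty)
next
  case (insert j I)
  have wj: "w j > 0" using insert by simp
  have IH: "\<And>n. finite (MS I w n) \<and> int (card (MS I w n)) = (\<Prod>i\<in>I. G (w i)) $ n"
    using insert by simp
  define f where "f k = (\<lambda>M'. M' + replicate_mset k j)" for k
  have inj: "inj_on (f k) A" for k A by (auto simp: inj_on_def f_def)
  have cnt: "count (f k M') j = k" if "M' \<in> MS I w m" for k M' m
    using that insert(2) by (auto simp: f_def MS_def count_eq_zero_iff)
  have eq: "MS (insert j I) w n = (\<Union>k\<in>{0..n div w j}. f k ` MS I w (n - k * w j))"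
    unfolding f_def using MS_insert[of j I w n] insert(2) wj by simp
  have fin: "finite (MS (insert j I) w n)" unfolding eq using IH by auto
  have "card (MS (insert j I) w n) = (\<Sum>k\<in>{0..n div w j}. card (f k ` MS I w (n - k * w j)))"
    unfolding eq
  proof (rule card_UN_disjoint)
    show "\<forall>k\<in>{0..n div w j}. finite (f k ` MS I w (n - k * w j))" using IH by auto
    show "\<forall>k\<in>{0..n div w j}. \<forall>k'\<in>{0..n div w j}. k \<noteq> k' \<longrightarrow> f k ` MS I w (n - k * w j) \<inter> f k' ` MS I w (n - k' * w j) = {}"
    proof (intro ballI impI)
      fix k k' :: nat assume kk: "k \<noteq> k'"
      show "f k ` MS I w (n - k * w j) \<inter> f k' ` MS I w (n - k' * w j) = {}"
      proof (rule ccontr)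
        assume "f k ` MS I w (n - k * w j) \<inter> f k' ` MS I w (n - k' * w j) \<noteq> {}"
        then obtain M1 M2 where M12: "M1 \<in> MS I w (n - k * w j)" "M2 \<in> MS I w (n - k' * w j)" "f k M1 = f k' M2"
          by blast
        have "k = count (f k M1) j" using cnt[OF M12(1)] by simp
        also have "\<dots> = count (f k' M2) j" using M12(3) by simp
        also have "\<dots> = k'" using cnt[OF M12(2)] by simp
        finally show False using kk by simp
      qed
    qed
  qed simp
  also have "\<dots> = (\<Sum>k\<in>{0..n div w j}. card (MS I w (n - k * w j)))"
    by (intro sum.cong refl card_image inj)
  finally have "int (card (MS (insert j I) w n)) = (\<Sum>k\<in>{0..n div w j}. (\<Prod>i\<in>I. G (w i)) $ (n - k * w j))"
    using IH by simp
  also have "\<dots> = (G (w j) * (\<Prod>i\<in>I. G (w i))) $ n" by (rule G_mult_nth[OF wj, symmetric])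
  also have "\<dots> = (\<Prod>i\<in>insert j I. G (w i)) $ n" using insert by simp
  finally show ?case using fin by simp
qed

section \<open>Relating b4_34 to a power series\<close>

lemma mem_le_sum: "x \<in># M \<Longrightarrow> fst (x :: nat \<times> nat) \<le> sum_mset (image_mset fst M)"
proof -
  assume "x \<in># M"
  then obtain M' where "M = add_mset x M'" by (metis multi_member_split)
  then show ?thesis by simp
qed

lemma b4_34_MS: "b4_34 n = card (MS (Sa n \<times> {0..<4::nat}) fst n)"
proof -
  have "{M :: (nat \<times> nat) multiset.
      (\<forall>x \<in># M. 0 < fst x \<and> \<not> 3 dvd fst x \<and> \<not> 4 dvd fst x \<and> snd x < 4) \<and>
      sum_mset (image_mset fst M) = n} = MS (Sa n \<times> {0..<4::nat}) fst n"
  proof (intro set_eqI iffI)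
    fix M :: "(nat \<times> nat) multiset"
    assume M: "M \<in> {M. (\<forall>x \<in># M. 0 < fst x \<and> \<not> 3 dvd fst x \<and> \<not> 4 dvd fst x \<and> snd x < 4) \<and>
      sum_mset (image_mset fst M) = n}"
    have "set_mset M \<subseteq> Sa n \<times> {0..<4}"
    proof
      fix x assume x: "x \<in> set_mset M"
      then have "fst x \<le> n" using M mem_le_sum[of x M] by simp
      then show "x \<in> Sa n \<times> {0..<4}" using M x by (cases x) (auto simp: Sa_def allowed_def)
    qed
    then show "M \<in> MS (Sa n \<times> {0..<4}) fst n" using M by (simp add: MS_def)
  next
    fix M :: "(nat \<times> nat) multiset"
    assume "M \<in> MS (Sa n \<times> {0..<4}) fst n"
    then show "M \<in> {M. (\<forall>x \<in># M. 0 < fst x \<and> \<not> 3 dvd fst x \<and> \<not> 4 dvd fst x \<and> snd x < 4) \<and>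
      sum_mset (image_mset fst M) = n}"
      by (auto simp: MS_def Sa_def allowed_def)
  qed
  then show ?thesis by (simp add: b4_34_def)
qed

lemma b4_34_coeff: "int (b4_34 n) = ((\<Prod>m\<in>Sa n. G m) ^ 4) $ n"
proof -
  have fin: "finite (Sa n \<times> {0..<4::nat})" by (simp add: Sa_def)
  have pos: "\<And>i. i \<in> Sa n \<times> {0..<4::nat} \<Longrightarrow> fst i > 0" by (auto simp: Sa_def)
  have "int (b4_34 n) = (\<Prod>i\<in>Sa n \<times> {0..<4::nat}. G (fst i)) $ n"
    unfolding b4_34_MS using MS_count[of "Sa n \<times> {0..<4::nat}" fst n, OF fin pos] by simp
  also have "(\<Prod>i\<in>Sa n \<times> {0..<4::nat}. G (fst i)) = (\<Prod>(m, c)\<in>Sa n \<times> {0..<4::nat}. G m)"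
    by (intro prod.cong) auto
  also have "\<dots> = (\<Prod>m\<in>Sa n. \<Prod>c\<in>{0..<4::nat}. G m)"
    by (rule prod.cartesian_product[symmetric])
  also have "\<dots> = (\<Prod>m\<in>Sa n. G m ^ 4)" by simp
  also have "\<dots> = (\<Prod>m\<in>Sa n. G m) ^ 4" by (simp add: prod_power_distrib)
  finally show ?thesis .
qed

definition Hs :: "int fps" where
  "Hs = pinf (\<lambda>m. if allowed m then G m else 1)"

lemma G_teq: "m \<ge> 1 \<Longrightarrow> teq (m - Suc 0) (G m) 1"
  by (auto simp: teq_def G_def dest: dvd_imp_le)

lemma Hs_teq: "teq N Hs (\<Prod>m\<in>Sa N. G m)"
proof -
  have "teq N Hs (\<Prod>m\<in>{1..N}. if allowed m then G m else 1)"
    unfolding Hs_def by (rule pinf_teq) (auto intro: G_teq)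
  also have "(\<Prod>m\<in>{1..N}. if allowed m then G m else 1) = (\<Prod>m\<in>Sa N. G m)"
    unfolding Sa_def by (rule prod.inter_filter[symmetric]) simp
  finally show ?thesis .
qed

lemma b4_34_Hs: "int (b4_34 n) = (Hs ^ 4) $ n"
  using teq_power[OF Hs_teq[of n], of 4] b4_34_coeff[of n] by (simp add: teq_def)

lemma G_inv: "m > 0 \<Longrightarrow> (1 - fps_X ^ m) * G m = 1"
proof (rule fps_ext)
  fix n assume m: "m > 0"
  show "((1 - fps_X ^ m) * G m) $ n = 1 $ n"
  proof (cases "n < m")
    case True
    then show ?thesis by (auto simp: algebra_simps fps_X_power_mult_nth G_def dest: dvd_imp_le)
  next
    case False
    then have "m dvd n \<longleftrightarrow> m dvd (n - m)" by (simp add: dvd_minus_self)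
    then show ?thesis using False m by (auto simp: algebra_simps fps_X_power_mult_nth G_def)
  qed
qed

lemma red_Hs_AA: "teq N (red Hs * AA N) 1"
proof -
  have "teq N (Hs * (\<Prod>m\<in>Sa N. 1 - fps_X ^ m)) ((\<Prod>m\<in>Sa N. G m) * (\<Prod>m\<in>Sa N. 1 - fps_X ^ m))"
    by (intro teq_mult Hs_teq teq_refl)
  also have "(\<Prod>m\<in>Sa N. G m) * (\<Prod>m\<in>Sa N. 1 - fps_X ^ m) = (\<Prod>m\<in>Sa N. (1 - fps_X ^ m) * G m)"
    by (simp add: prod.distrib mult.commute)
  also have "\<dots> = 1" by (intro prod.neutral ballI G_inv) (auto simp: Sa_def)
  finally have "teq N (red (Hs * (\<Prod>m\<in>Sa N. 1 - fps_X ^ m))) (red 1)" by (rule red_teq)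
  moreover have "red (\<Prod>m\<in>Sa N. 1 - fps_X ^ m) = AA N"
    by (simp add: AA_def red_prod red_diff red_1 red_X_power)
  ultimately show ?thesis by (simp add: red_mult red_1)
qed

section \<open>The mod 8 reduction\<close>

lemma fps_4_nth: "((4::int fps) * a) $ n = 4 * a $ n"
  by (simp add: numeral_fps_const)

lemma odd_part_4:
  assumes n: "odd n"
  shows "(Hs ^ 4) $ n = 4 * (ev Hs ^ 3 * od Hs + ev Hs * od Hs ^ 3) $ n"
proof -
  define E where "E = ev Hs"
  define Q where "Q = od Hs"
  have H: "Hs = E + Q" by (simp add: E_def Q_def ev_od)
  have pE: "psupp True E" and pQ: "psupp False Q" by (simp_all add: E_def Q_def psupp_ev psupp_od)
  have pEE: "psupp True (E * E)" using psupp_mult[OF pE pE] by simp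
  have pQO: "psupp True (Q * Q)" using psupp_mult[OF pQ pQ] by simp
  have p1: "psupp True (E ^ 4)" using psupp_mult[OF pEE pEE] by (simp add: power_numeral_reduce mult_ac)
  have p2: "psupp True (E ^ 2 * Q ^ 2)" using psupp_mult[OF pEE pQO] by (simp add: power2_eq_square)
  have p3: "psupp True (Q ^ 4)" using psupp_mult[OF pQO pQO] by (simp add: power_numeral_reduce mult_ac)
  have exp: "(E + Q) ^ 4 = E ^ 4 + 6 * (E ^ 2 * Q ^ 2) + Q ^ 4 + 4 * (E ^ 3 * Q + E * Q ^ 3)"
    by (simp add: power_numeral_reduce algebra_simps)
  have z: "(E ^ 4) $ n = 0" "(E ^ 2 * Q ^ 2) $ n = 0" "(Q ^ 4) $ n = 0"
    using p1 p2 p3 n by (auto simp: psupp_def)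
  have six: "(6 * (E ^ 2 * Q ^ 2)) $ n = 6 * (E ^ 2 * Q ^ 2) $ n" by (simp add: numeral_fps_const)
  have "Hs ^ 4 = E ^ 4 + 6 * (E ^ 2 * Q ^ 2) + Q ^ 4 + 4 * (E ^ 3 * Q + E * Q ^ 3)"
    using H exp by simp
  then have "(Hs ^ 4) $ n = 4 * (E ^ 3 * Q + E * Q ^ 3) $ n"
    by (simp only: fps_add_nth six fps_4_nth z) (simp?)
  then show ?thesis by (simp add: E_def Q_def)
qed

lemma red_part: "red (ev Hs ^ 3 * od Hs + ev Hs * od Hs ^ 3) = ev (red Hs) * od (red Hs) * red Hs ^ 2"
proof -
  define e where "e = ev (red Hs)"
  define q where "q = od (red Hs)"
  have h: "red Hs = e + q" by (simp add: e_def q_def ev_od)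
  have "red (ev Hs ^ 3 * od Hs + ev Hs * od Hs ^ 3) = e ^ 3 * q + e * q ^ 3"
    by (simp add: red_add red_mult red_power red_ev red_od e_def q_def)
  also have "\<dots> = e * q * (e ^ 2 + q ^ 2)" by (simp add: algebra_simps power_numeral_reduce)
  also have "e ^ 2 + q ^ 2 = (e + q) ^ 2" by (simp add: bfps_add_sq)
  finally have X: "red (ev Hs ^ 3 * od Hs + ev Hs * od Hs ^ 3) = e * q * (e + q) ^ 2" .
  show ?thesis using X unfolding h[symmetric] by (simp only: e_def q_def)
qed

lemma hW_red: "red Hs * (fr 6 * fr 12) = (eul * fr 3) ^ 3"
  by (rule h_identity[OF red_Hs_AA])

lemma b4_mod8:
  assumes n: "odd m" and c: "(ev (red Hs) * od (red Hs) * red Hs ^ 2) $ m = 0"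
  shows "b4_34 m mod 8 = 0"
proof -
  define c where "c = (ev Hs ^ 3 * od Hs + ev Hs * od Hs ^ 3) $ m"
  have b: "int (b4_34 m) = 4 * c" unfolding c_def b4_34_Hs by (rule odd_part_4[OF n])
  have "(of_int c :: bit) = 0"
    using c arg_cong[OF red_part, of "\<lambda>z. z $ m"] by (simp add: c_def red_nth)
  then have "even c" by (simp add: bit_of_int_eq_0)
  then obtain d where "c = 2 * d" by (auto elim: evenE)
  then have "int (b4_34 m) = 8 * d" using b by simp
  then have "int (b4_34 m) mod 8 = 0" by simp
  then have "int (b4_34 m mod 8) = 0" by (simp add: of_nat_mod)
  then show ?thesis by simp
qed

section \<open>Triangular numbers are of the form P1 + 2 P2\<close>

lemma rep3: "m \<ge> 1 \<Longrightarrow> \<exists>X Y :: int. X * X + 2 * (Y * Y) = 3 * (int m * int m) \<and> \<not> 3 dvd X \<and> \<not> 3 dvd Y"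
proof (induction m rule: less_induct)
  case (less m)
  show ?case
  proof (cases "3 dvd m")
    case False
    then have "\<not> 3 dvd int m" by presburger
    then show ?thesis by (intro exI[of _ "int m"]) simp
  next
    case True
    then obtain m1 where m1: "m = 3 * m1" by (auto elim: dvdE)
    have "m1 \<ge> 1" "m1 < m" using m1 less.prems by auto
    then obtain X1 Y1 :: int where XY: "X1 * X1 + 2 * (Y1 * Y1) = 3 * (int m1 * int m1)" "\<not> 3 dvd X1" "\<not> 3 dvd Y1"
      using less.IH by blast
    have mm: "3 * (int m * int m) = 9 * (3 * (int m1 * int m1))" using m1 by simp
    show ?thesis
    proof (cases "3 dvd (X1 + Y1)")
      case False
      have "(X1 + 4 * Y1) * (X1 + 4 * Y1) + 2 * ((2 * X1 - Y1) * (2 * X1 - Y1)) = 9 * (X1 * X1 + 2 * (Y1 * Y1))"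
        by (simp add: algebra_simps)
      moreover have "\<not> 3 dvd (X1 + 4 * Y1)" "\<not> 3 dvd (2 * X1 - Y1)" using False by presburger+
      ultimately show ?thesis unfolding mm XY(1)[symmetric] by blast
    next
      case True
      have "(X1 - 4 * Y1) * (X1 - 4 * Y1) + 2 * ((2 * X1 + Y1) * (2 * X1 + Y1)) = 9 * (X1 * X1 + 2 * (Y1 * Y1))"
        by (simp add: algebra_simps)
      moreover have "\<not> 3 dvd (X1 - 4 * Y1)" "\<not> 3 dvd (2 * X1 + Y1)" using True XY(2) by presburger+
      ultimately show ?thesis unfolding mm XY(1)[symmetric] by blast
    qed
  qed
qed

lemma pent_of:
  assumes "odd X" "\<not> 3 dvd X"
  shows "\<exists>P. pentagonal P \<and> 24 * P = X * X - 1"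
proof -
  have "X mod 6 = 1 \<or> X mod 6 = 5" using assms by presburger
  then obtain k :: int where k: "X * X = (6 * k - 1) * (6 * k - 1)"
  proof
    assume "X mod 6 = 5"
    then have "6 * ((X + 1) div 6) = X + 1" by presburger
    then show ?thesis using that[of "(X + 1) div 6"] by simp
  next
    assume "X mod 6 = 1"
    then have "6 * ((1 - X) div 6) = 1 - X" by presburger
    then have e: "6 * ((1 - X) div 6) - 1 = - X" by simp
    have "X * X = (6 * ((1 - X) div 6) - 1) * (6 * ((1 - X) div 6) - 1)" unfolding e by simp
    then show ?thesis using that[of "(1 - X) div 6"] by blast
  qed
  define P where "P = k * (3 * k - 1) div 2"
  have ev: "even (k * (3 * k - 1))" by presburger
  then have "2 * P = k * (3 * k - 1)" unfolding P_def by simp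
  then have "24 * P = X * X - 1" using k by (simp add: algebra_simps)
  moreover have "pentagonal P" unfolding pentagonal_def P_def by blast
  ultimately show ?thesis by blast
qed

lemma tri_rep: "\<exists>P1 P2. pentagonal P1 \<and> pentagonal P2 \<and> int (T t) = P1 + 2 * P2"
proof -
  obtain X Y :: int where XY: "X * X + 2 * (Y * Y) = 3 * (int (2 * t + 1) * int (2 * t + 1))"
    "\<not> 3 dvd X" "\<not> 3 dvd Y" using rep3[of "2 * t + 1"] by auto
  have oddX: "odd X"
  proof
    assume "even X"
    then have "even (X * X + 2 * (Y * Y))" by simp
    moreover have "odd (3 * (int (2 * t + 1) * int (2 * t + 1)))" by simp
    ultimately show False using XY(1) by simp
  qed
  have oddY: "odd Y"
  proof
    assume "even Y"
    then obtain c where c: "Y = 2 * c" by (auto elim: evenE)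
    obtain a where a: "X = 2 * a + 1" using oddX by (auto elim: oddE)
    have "4 * (a * a + a) + 1 + 8 * (c * c) = 12 * (int t * int t + int t) + 3"
      using XY(1) a c by (simp add: algebra_simps)
    moreover have "even (a * a + a)" by presburger
    ultimately show False by presburger
  qed
  obtain P1 where P1: "pentagonal P1" "24 * P1 = X * X - 1" using pent_of[OF oddX XY(2)] by blast
  obtain P2 where P2: "pentagonal P2" "24 * P2 = Y * Y - 1" using pent_of[OF oddY XY(3)] by blast
  have "24 * int (T t) + 3 = 3 * (8 * int (T t) + 1)" by simp
  also have "\<dots> = X * X + 2 * (Y * Y)" unfolding T8 XY(1) by (simp add: algebra_simps)
  finally have "24 * int (T t) = 24 * P1 + 2 * (24 * P2)" using P1 P2 by simp
  then have "int (T t) = P1 + 2 * P2" by simp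
  then show ?thesis using P1 P2 by blast
qed

theorem mainTheorem8:
  fixes n :: nat
  assumes "\<not> (\<exists>P1 P2. pentagonal P1 \<and> pentagonal P2 \<and> int n = P1 + 2 * P2)"
  shows "b4_34 (16 * n + 3) mod 8 = 0 \<and> b4_34 (48 * n + 7) mod 8 = 0"
proof -
  have notri: "\<not> (\<exists>t. n = T t)" using assms tri_rep by blast
  then have psi0: "psi $ n = 0" by (simp add: psi_nth)
  show ?thesis
  proof
    show "b4_34 (16 * n + 3) mod 8 = 0"
      by (rule b4_mod8) (simp_all add: C_coeffs(1)[OF hW_red] psi0)
    show "b4_34 (48 * n + 7) mod 8 = 0"
      by (rule b4_mod8) (simp_all add: C_coeffs(2)[OF hW_red] psi0)
  qed
qed

end
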